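(* Let $\mathcal{I}$ be a meager ideal on $\mathbf{N}$ and let $A=(a_{n,i})$ be a regular matrix. Then the set $$\{x\in(0,1]: \Gamma_b^k(x,\mathcal{I},A)\supseteq\Delta_b^k \text{ for all integers } b\ge2,\ k\ge1\}$$ is comeager in $(0,1]$.
   Context: For an integer $b\ge 2$ and $x\in(0,1]$, write $x=\sum_{n\ge 1} d_{b,n}(x)/b^n$ for the unique nonterminating $b$-adic expansion, with digits $d_{b,n}(x)\in\{0,\dots,b-1\}$. Let $S_b^k$ be the set of strings $\bm{s}=s_1\cdots s_k$ of length $k$ over $\{0,\dots,b-1\}$. For $\bm{s}\in S_b^k$ and $n\ge1$ put $\pi_{b,\bm{s},n}(x)=\frac{1}{n}\#\{i\in\{1,\dots,n\}: d_{b,i+j-1}(x)=s_j \text{ for all } j=1,\dots,k\}$, and $\bm{\pi}^k_{b,n}(x)=(\pi_{b,\bm{s},n}(x):\bm{s}\in S_b^k)\in\mathbf{R}^{b^k}$. Let $\Delta_b^k=\{(p_{\bm{s}})_{\bm{s}\in S_b^k}\in\mathbf{R}^{b^k}: \sum_{\bm{s}}p_{\bm{s}}=1,\ p_{\bm{s}}\ge0,\ \sum_{s_0}p_{s_0\bm{s}}=\sum_{s_k}p_{\bm{s}s_k} \text{ for all } \bm{s}\in S_b^{k-1}\}$ (concatenated strings). An ideal on $\mathbf{N}$ is a family $\mathcal{I}\subseteq\mathcal{P}(\mathbf{N})$ closed under finite unions and subsets, containing all finite sets, and $\ne\mathcal{P}(\mathbf{N})$; it is meager if it is a meager subset of $\mathcal{P}(\mathbf{N})$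 with the Cantor-space topology. A regular matrix is an infinite real matrix $A=(a_{n,i})_{n,i\in\mathbf{N}}$ such that for every $d$ and every $\mathbf{R}^d$-valued sequence $\bm{z}=(\bm{z}_i)$ converging to $\bm{\eta}$, the series $A_n\bm{z}:=\sum_i a_{n,i}\bm{z}_i$ exists for all $n$ and $\lim_n A_n\bm{z}=\bm{\eta}$. For a sequence $(x_n)$ in $\mathbf{R}^d$, $\eta$ is an $\mathcal{I}$-cluster point if $\{n: x_n\in U\}\notin\mathcal{I}$ for every open neighborhood $U$ of $\eta$. With $\bm{\pi}^k_b(x)=(\bm{\pi}^k_{b,n}(x):n\ge1)$, $\Gamma_b^k(x,\mathcal{I},A)$ denotes the set of $\mathcal{I}$-cluster points of the sequence $(A_n\bm{\pi}^k_b(x):n\ge1)$. *)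

theory Defs
  imports "HOL-Analysis.Analysis"
begin

(* The unique nonterminating b-adic expansion of x: d 0 is a dummy (= 0),
   digits d 1, d 2, ... in {0..b-1}, x = sum_{n>=1} d n / b^n, infinitely many nonzero digits. *)
definition nonterm_expansion :: "nat \<Rightarrow> real \<Rightarrow> (nat \<Rightarrow> nat) \<Rightarrow> bool" where
  "nonterm_expansion b x d \<longleftrightarrow>
     d 0 = 0 \<and> (\<forall>n. d n < b) \<and>
     (\<lambda>n. real (d (Suc n)) / real b ^ Suc n) sums x \<and>
     infinite {n. d n \<noteq> 0}"

definition digit :: "nat \<Rightarrow> real \<Rightarrow> nat \<Rightarrow> nat" where
  "digit b x = (THE d. nonterm_expansion b x d)"

definition strings :: "nat \<Rightarrow> nat \<Rightarrow> nat list set" where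
  "strings b k = {s. length s = k \<and> set s \<subseteq> {..<b}}"

definition freq :: "nat \<Rightarrow> nat list \<Rightarrow> nat \<Rightarrow> real \<Rightarrow> real" where
  "freq b s n x = real (card {i \<in> {1..n}. \<forall>j < length s. digit b x (i + j) = s ! j}) / real n"

(* Delta_b^k as a subset of R^{S_b^k}, vectors = extensional functions on S_b^k *)
definition Delta :: "nat \<Rightarrow> nat \<Rightarrow> (nat list \<Rightarrow> real) set" where
  "Delta b k = {p. p \<in> extensional (strings b k) \<and>
      (\<Sum>s\<in>strings b k. p s) = 1 \<and> (\<forall>s\<in>strings b k. p s \<ge> 0) \<and>
      (\<forall>s\<in>strings b (k - 1). (\<Sum>c<b. p (c # s)) = (\<Sum>c<b. p (s @ [c])))}"

definition is_ideal :: "nat set set \<Rightarrow> bool" where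
  "is_ideal I \<longleftrightarrow> (\<forall>A\<in>I. \<forall>B\<in>I. A \<union> B \<in> I) \<and> (\<forall>A\<in>I. \<forall>B. B \<subseteq> A \<longrightarrow> B \<in> I) \<and>
     (\<forall>F. finite F \<longrightarrow> F \<in> I) \<and> I \<noteq> Pow UNIV"

definition nowhere_dense_in :: "'a topology \<Rightarrow> 'a set \<Rightarrow> bool" where
  "nowhere_dense_in X N \<longleftrightarrow> N \<subseteq> topspace X \<and> X interior_of (X closure_of N) = {}"

definition meager_in :: "'a topology \<Rightarrow> 'a set \<Rightarrow> bool" where
  "meager_in X S \<longleftrightarrow> S \<subseteq> topspace X \<and>
     (\<exists>F. countable F \<and> (\<forall>N\<in>F. nowhere_dense_in X N) \<and> S \<subseteq> \<Union>F)"

definition comeager_in :: "'a topology \<Rightarrow> 'a set \<Rightarrow> bool" where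
  "comeager_in X S \<longleftrightarrow> meager_in X (topspace X - S)"

(* Cantor space 2^N, P(N) identified with characteristic functions *)
definition cantor_space :: "(nat \<Rightarrow> bool) topology" where
  "cantor_space = product_topology (\<lambda>_. discrete_topology (UNIV :: bool set)) UNIV"

definition meager_ideal :: "nat set set \<Rightarrow> bool" where
  "meager_ideal I \<longleftrightarrow> is_ideal I \<and> meager_in cantor_space ((\<lambda>A n. n \<in> A) ` I)"

(* regular matrix: for every d and every R^d-valued convergent sequence (coordinates j < d) *)
definition regular_matrix :: "(nat \<Rightarrow> nat \<Rightarrow> real) \<Rightarrow> bool" where
  "regular_matrix a \<longleftrightarrow>
     (\<forall>(d::nat) (z::nat \<Rightarrow> nat \<Rightarrow> real) (\<eta>::nat \<Rightarrow> real).
        (\<forall>j<d. (\<lambda>i. z i j) \<longlonglongrightarrow> \<eta> j) \<longrightarrow>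
        (\<forall>n. \<forall>j<d. summable (\<lambda>i. a n i * z i j)) \<and>
        (\<forall>j<d. (\<lambda>n. \<Sum>i. a n i * z i j) \<longlonglongrightarrow> \<eta> j))"

definition I_cluster_point :: "'a topology \<Rightarrow> nat set set \<Rightarrow> (nat \<Rightarrow> 'a) \<Rightarrow> 'a \<Rightarrow> bool" where
  "I_cluster_point X I xs \<eta> \<longleftrightarrow> \<eta> \<in> topspace X \<and>
     (\<forall>U. openin X U \<and> \<eta> \<in> U \<longrightarrow> {n. xs n \<in> U} \<notin> I)"

definition Rstrings :: "nat \<Rightarrow> nat \<Rightarrow> (nat list \<Rightarrow> real) topology" where
  "Rstrings b k = product_topology (\<lambda>_. euclideanreal) (strings b k)"

(* A_n pi^k_b(x); sequences and matrix indices start at 0, term i of pi^k_b(x) is pi^k_{b,i+1}(x) *)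
definition Api :: "(nat \<Rightarrow> nat \<Rightarrow> real) \<Rightarrow> nat \<Rightarrow> nat \<Rightarrow> real \<Rightarrow> nat \<Rightarrow> (nat list \<Rightarrow> real)" where
  "Api a b k x n = (\<lambda>s\<in>strings b k. \<Sum>i. a n i * freq b s (Suc i) x)"

definition Gamma_clust :: "nat \<Rightarrow> nat \<Rightarrow> real \<Rightarrow> nat set set \<Rightarrow> (nat \<Rightarrow> nat \<Rightarrow> real) \<Rightarrow> (nat list \<Rightarrow> real) set" where
  "Gamma_clust b k x I a = {\<eta>. I_cluster_point (Rstrings b k) I (Api a b k x) \<eta>}"

end

theory Submission
  imports Defs
begin

lemma topspace_cantor: "topspace cantor_space = UNIV"
  unfolding cantor_space_def by (simp add: topspace_product_topology)

lemma nd_step: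
  assumes nd: "nowhere_dense_in cantor_space Nd"
  shows "\<exists>Q' L'. L \<le> L' \<and> Q' \<inter> {..<L} = Q \<inter> {..<L} \<and>
     (\<forall>S. S \<inter> {..<L'} = Q' \<inter> {..<L'} \<longrightarrow> (\<lambda>n. n \<in> S) \<notin> Nd)"
proof -
  define C where "C = PiE UNIV (\<lambda>i. if i < L then {i \<in> Q} else (UNIV::bool set))"
  have "{i. (if i < L then {i \<in> Q} else (UNIV::bool set)) \<noteq> UNIV} \<subseteq> {..<L}" by auto
  hence fin: "finite {i. (if i < L then {i \<in> Q} else (UNIV::bool set)) \<noteq> UNIV}"
    using finite_subset by blast
  have oC: "openin cantor_space C"
    unfolding C_def cantor_space_def
    by (subst openin_PiE_gen) (use fin in auto)
  have p0: "(\<lambda>i. i \<in> Q) \<in> C" unfolding C_def by auto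
  have "\<not> C \<subseteq> cantor_space closure_of Nd"
  proof
    assume "C \<subseteq> cantor_space closure_of Nd"
    hence "C \<subseteq> cantor_space interior_of (cantor_space closure_of Nd)"
      using oC interior_of_maximal by blast
    with nd p0 show False unfolding nowhere_dense_in_def by auto
  qed
  then obtain p where pC: "p \<in> C" and pn: "p \<notin> cantor_space closure_of Nd" by auto
  then obtain T where pT: "p \<in> T" and oT: "openin cantor_space T" and TN: "\<forall>y\<in>Nd. y \<notin> T"
    unfolding in_closure_of topspace_cantor by auto
  from oT pT obtain U where Ufin: "finite {i. U i \<noteq> (UNIV::bool set)}"
      and pU: "p \<in> PiE UNIV U" and UT: "PiE UNIV U \<subseteq> T"
    unfolding cantor_space_def openin_product_topology_alt by force
  define L' where "L' = Suc (L + \<Sum>{i. U i \<noteq> (UNIV::bool set)})"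
  have bound: "i < L'" if "U i \<noteq> UNIV" for i
  proof -
    have "i \<le> \<Sum>{i. U i \<noteq> (UNIV::bool set)}"
      using member_le_sum[of i "{i. U i \<noteq> (UNIV::bool set)}" "\<lambda>x. x"] that Ufin by auto
    thus ?thesis unfolding L'_def by auto
  qed
  show ?thesis
  proof (intro exI conjI allI impI)
    show "L \<le> L'" unfolding L'_def by auto
    have pi: "p i = (i \<in> Q)" if "i < L" for i
    proof -
      have "p i \<in> (if i < L then {i \<in> Q} else UNIV)" using pC unfolding C_def by blast
      with that show ?thesis by simp
    qed
    show "{i. p i} \<inter> {..<L} = Q \<inter> {..<L}" using pi by auto
    fix S assume S: "S \<inter> {..<L'} = {i. p i} \<inter> {..<L'}"
    have "(\<lambda>n. n \<in> S) \<in> PiE UNIV U"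
    proof -
      have "(i \<in> S) \<in> U i" for i
      proof (cases "U i = UNIV")
        case False
        hence "i < L'" by (rule bound)
        hence "(i \<in> S) = p i" using S by blast
        thus ?thesis using pU by auto
      qed auto
      thus ?thesis by auto
    qed
    thus "(\<lambda>n. n \<in> S) \<notin> Nd" using UT TN by auto
  qed
qed

lemma nd_multi:
  assumes nd: "\<And>m. nowhere_dense_in cantor_space (f m)"
  shows "finite X \<Longrightarrow> (\<forall>(\<sigma>,m)\<in>X. \<sigma> \<subseteq> {..<N}) \<Longrightarrow>
    \<exists>L T. N < L \<and> T \<subseteq> {N..<L} \<and>
       (\<forall>(\<sigma>,m)\<in>X. \<forall>S. S \<inter> {..<L} = \<sigma> \<union> T \<longrightarrow> (\<lambda>n. n \<in> S) \<notin> f m)"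
proof (induction X rule: finite_induct)
  case empty
  show ?case by (intro exI[of _ "Suc N"] exI[of _ "{}"]) auto
next
  case (insert x X)
  obtain \<sigma> m where x: "x = (\<sigma>, m)" by force
  from insert.prems x have sig: "\<sigma> \<subseteq> {..<N}" by auto
  from insert.IH insert.prems obtain L T where NL: "N < L" and T: "T \<subseteq> {N..<L}"
    and old: "\<forall>(\<sigma>,m)\<in>X. \<forall>S. S \<inter> {..<L} = \<sigma> \<union> T \<longrightarrow> (\<lambda>n. n \<in> S) \<notin> f m" by auto
  obtain Q' L' where LL': "L \<le> L'" and Q': "Q' \<inter> {..<L} = (\<sigma> \<union> T) \<inter> {..<L}"
    and new: "\<forall>S. S \<inter> {..<L'} = Q' \<inter> {..<L'} \<longrightarrow> (\<lambda>n. n \<in> S) \<notin> f m"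
    using nd_step[OF nd[of m], of L "\<sigma> \<union> T"] by blast
  define T' where "T' = Q' \<inter> {N..<L'}"
  have T'L: "T' \<inter> {..<L} = T"
  proof -
    have "T' \<inter> {..<L} = (Q' \<inter> {..<L}) \<inter> {N..}" using LL' by (auto simp: T'_def)
    also have "\<dots> = T" using Q' T sig by auto
    finally show ?thesis .
  qed
  have Q'N: "Q' \<inter> {..<L'} = \<sigma> \<union> T'"
  proof -
    have "Q' \<inter> {..<N} = (Q' \<inter> {..<L}) \<inter> {..<N}" using NL by auto
    also have "\<dots> = \<sigma>" using Q' T sig NL by auto
    finally have "Q' \<inter> {..<N} = \<sigma>" .
    thus ?thesis unfolding T'_def using NL LL' by auto
  qed
  show ?case
  proof (intro exI conjI)
    show "N < L'" using NL LL' by auto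
    show "T' \<subseteq> {N..<L'}" unfolding T'_def by auto
    show "\<forall>(\<sigma>, m)\<in>insert x X. \<forall>S. S \<inter> {..<L'} = \<sigma> \<union> T' \<longrightarrow> (\<lambda>n. n \<in> S) \<notin> f m"
    proof (intro ballI)
      fix y assume y: "y \<in> insert x X"
      obtain \<sigma>1 m1 where y1: "y = (\<sigma>1, m1)" by force
      have "\<forall>S. S \<inter> {..<L'} = \<sigma>1 \<union> T' \<longrightarrow> (\<lambda>n. n \<in> S) \<notin> f m1"
      proof (intro allI impI)
        fix S assume S: "S \<inter> {..<L'} = \<sigma>1 \<union> T'"
        show "(\<lambda>n. n \<in> S) \<notin> f m1"
        proof (cases "y = x")
          case True
          thus ?thesis using new S Q'N x y1 by auto
        next
          case False
          hence yX: "(\<sigma>1, m1) \<in> X" using y y1 by auto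
          hence sy: "\<sigma>1 \<subseteq> {..<N}" using insert.prems by auto
          have "S \<inter> {..<L} = (S \<inter> {..<L'}) \<inter> {..<L}" using LL' by auto
          also have "\<dots> = \<sigma>1 \<union> T" using S T'L sy NL by auto
          finally show ?thesis using old yX by auto
        qed
      qed
      thus "case y of (\<sigma>, m) \<Rightarrow> \<forall>S. S \<inter> {..<L'} = \<sigma> \<union> T' \<longrightarrow> (\<lambda>n. n \<in> S) \<notin> f m"
        using y1 by simp
    qed
  qed
qed

lemma ideal_intervals:
  assumes "meager_ideal I"
  shows "\<exists>N. strict_mono N \<and> (\<forall>S. (\<forall>j0. \<exists>j\<ge>j0. {N j..<N (Suc j)} \<subseteq> S) \<longrightarrow> S \<notin> I)"
proof -
  have idl: "is_ideal I" and mg: "meager_in cantor_space ((\<lambda>A n. n \<in> A) ` I)"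
    using assms unfolding meager_ideal_def by auto
  obtain F where cF: "countable F" and ndF: "\<forall>Nd\<in>F. nowhere_dense_in cantor_space Nd"
    and cov: "(\<lambda>A n. n \<in> A) ` I \<subseteq> \<Union>F"
    using mg unfolding meager_in_def by auto
  have "{} \<in> I" using idl unfolding is_ideal_def by auto
  hence "F \<noteq> {}" using cov by auto
  define f where "f = from_nat_into F"
  have rf: "range f = F" unfolding f_def using range_from_nat_into[OF \<open>F \<noteq> {}\<close> cF] .
  have ndf: "nowhere_dense_in cantor_space (f m)" for m using ndF rf by auto
  define P where "P = (\<lambda>N j (LT :: nat \<times> nat set). N < fst LT \<and> snd LT \<subseteq> {N..<fst LT} \<and>
       (\<forall>\<sigma>\<subseteq>{..<N}. \<forall>m\<le>j. \<forall>S. S \<inter> {..<fst LT} = \<sigma> \<union> snd LT \<longrightarrow> (\<lambda>n. n \<in> S) \<notin> f m))"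
  have "\<exists>LT. P N j LT" for N j
  proof -
    have fin: "finite (Pow {..<N} \<times> {..j})" by auto
    have "\<exists>L T. N < L \<and> T \<subseteq> {N..<L} \<and>
      (\<forall>(\<sigma>,m)\<in>Pow {..<N} \<times> {..j}. \<forall>S. S \<inter> {..<L} = \<sigma> \<union> T \<longrightarrow> (\<lambda>n. n \<in> S) \<notin> f m)"
      by (rule nd_multi[OF ndf fin]) auto
    then obtain L T where A: "N < L" "T \<subseteq> {N..<L}" and
      B: "\<forall>(\<sigma>,m)\<in>Pow {..<N} \<times> {..j}. \<forall>S. S \<inter> {..<L} = \<sigma> \<union> T \<longrightarrow> (\<lambda>n. n \<in> S) \<notin> f m"
      by blast
    show ?thesis unfolding P_def
      apply (intro exI[of _ "(L,T)"])
      using A B by fastforce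
  qed
  then obtain G where G: "\<And>N j. P N j (G N j)" by metis
  define Nf where "Nf = rec_nat 0 (\<lambda>j Nj. fst (G Nj j))"
  have NfS: "Nf (Suc j) = fst (G (Nf j) j)" for j unfolding Nf_def by simp
  define T where "T j = snd (G (Nf j) j)" for j
  have NfSuc: "Nf j < Nf (Suc j)" for j using G[of "Nf j" j] NfS unfolding P_def by auto
  have sm: "strict_mono Nf" using NfSuc by (simp add: strict_mono_Suc_iff)
  have Tsub: "T j \<subseteq> {Nf j..<Nf (Suc j)}" for j using G[of "Nf j" j] NfS unfolding P_def T_def by auto
  have Tprop: "\<And>\<sigma> m S. \<sigma> \<subseteq> {..<Nf j} \<Longrightarrow> m \<le> j \<Longrightarrow> S \<inter> {..<Nf (Suc j)} = \<sigma> \<union> T j \<Longrightarrow>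
      (\<lambda>n. n \<in> S) \<notin> f m" for j
    using G[of "Nf j" j] NfS unfolding P_def T_def by auto
  have mono: "Nf i \<le> Nf j" if "i \<le> j" for i j using sm that by (simp add: strict_mono_less_eq)
  show ?thesis
  proof (intro exI conjI allI impI)
    show "strict_mono Nf" by (rule sm)
    fix S assume inf: "\<forall>j0. \<exists>j\<ge>j0. {Nf j..<Nf (Suc j)} \<subseteq> S"
    show "S \<notin> I"
    proof
      assume SI: "S \<in> I"
      define J where "J = {j. {Nf j..<Nf (Suc j)} \<subseteq> S}"
      define S2 where "S2 = (\<Union>j\<in>J. T j)"
      have "S2 \<subseteq> S" unfolding S2_def J_def using Tsub by blast
      hence "S2 \<in> I" using SI idl unfolding is_ideal_def by blast
      hence "(\<lambda>n. n \<in> S2) \<in> \<Union>F" using cov by auto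
      then obtain m where m: "(\<lambda>n. n \<in> S2) \<in> f m" using rf by auto
      obtain j where jm: "j \<ge> m" and jJ: "j \<in> J" using inf unfolding J_def by auto
      define \<sigma> where "\<sigma> = S2 \<inter> {..<Nf j}"
      have "S2 \<inter> {..<Nf (Suc j)} = \<sigma> \<union> T j"
      proof (rule set_eqI)
        fix n
        show "n \<in> S2 \<inter> {..<Nf (Suc j)} \<longleftrightarrow> n \<in> \<sigma> \<union> T j"
        proof
          assume n: "n \<in> S2 \<inter> {..<Nf (Suc j)}"
          then obtain j' where j': "j' \<in> J" "n \<in> T j'" unfolding S2_def by auto
          show "n \<in> \<sigma> \<union> T j"
          proof (cases "j' = j")
            case False
            show ?thesis
            proof (cases "j' < j")
              case True
              hence "Nf (Suc j') \<le> Nf j" using mono by auto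
              thus ?thesis using j' n Tsub[of j'] unfolding \<sigma>_def by auto
            next
              case False
              hence "Nf (Suc j) \<le> Nf j'" using mono \<open>j' \<noteq> j\<close> by auto
              thus ?thesis using j' n Tsub[of j'] by auto
            qed
          qed (use j' in auto)
        next
          assume "n \<in> \<sigma> \<union> T j"
          thus "n \<in> S2 \<inter> {..<Nf (Suc j)}"
            using jJ Tsub[of j] NfSuc[of j] unfolding \<sigma>_def S2_def by auto
        qed
      qed
      moreover have "\<sigma> \<subseteq> {..<Nf j}" unfolding \<sigma>_def by auto
      ultimately show False using Tprop[of \<sigma> j m S2] jm m by auto
    qed
  qed
qed

lemma geom_tail_sums:
  assumes b: "b \<ge> (2::nat)"
  shows "(\<lambda>i. (real b - 1) / real b ^ (i + P + 1)) sums (1 / real b ^ P)"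
proof -
  have bpos: "real b > 1" using b by auto
  have "(\<lambda>i. (1 / real b) ^ i) sums (1 / (1 - 1 / real b))"
    by (rule geometric_sums) (use bpos in auto)
  hence "(\<lambda>i. ((real b - 1) / real b ^ (P + 1)) * (1 / real b) ^ i) sums
          (((real b - 1) / real b ^ (P + 1)) * (1 / (1 - 1 / real b)))"
    by (rule sums_mult)
  moreover have "((real b - 1) / real b ^ (P + 1)) * (1 / (1 - 1 / real b)) = 1 / real b ^ P"
    using bpos by (simp add: field_simps)
  moreover have "((real b - 1) / real b ^ (P + 1)) * (1 / real b) ^ i = (real b - 1) / real b ^ (i + P + 1)" for i
    using bpos by (simp add: field_simps power_add power_one_over)
  ultimately show ?thesis by simp
qed

lemma expansion_tail:
  assumes b: "b \<ge> (2::nat)" and e: "nonterm_expansion b x d"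
  shows "0 < x - (\<Sum>i<P. real (d (Suc i)) / real b ^ Suc i)"
    and "x - (\<Sum>i<P. real (d (Suc i)) / real b ^ Suc i) \<le> 1 / real b ^ P"
proof -
  define f where "f i = real (d (Suc i)) / real b ^ Suc i" for i
  have fs: "f sums x" using e unfolding nonterm_expansion_def f_def by auto
  have tail: "(\<lambda>i. f (i + P)) sums (x - sum f {..<P})"
    using sums_iff_shift[of f P "x - sum f {..<P}"] fs by simp
  have bpos: "real b > 1" using b by auto
  have f0: "0 \<le> f i" for i unfolding f_def by auto
  have "\<exists>m>P. d m \<noteq> 0"
    using e unfolding nonterm_expansion_def infinite_nat_iff_unbounded by auto
  then obtain m where mP: "m > P" and dm: "d m \<noteq> 0" by auto
  have "0 < f (m - 1 - P + P)"
    using mP dm bpos unfolding f_def by (simp add: Suc_diff_Suc)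
  hence "0 < suminf (\<lambda>i. f (i + P))"
    by (intro suminf_pos2[of "\<lambda>i. f (i + P)" "m - 1 - P"]) (use sums_summable[OF tail] f0 in auto)
  thus "0 < x - (\<Sum>i<P. real (d (Suc i)) / real b ^ Suc i)"
    using sums_unique[OF tail] unfolding f_def by simp
  have le: "f (i + P) \<le> (real b - 1) / real b ^ (i + P + 1)" for i
  proof -
    have "d (Suc (i + P)) < b" using e unfolding nonterm_expansion_def by auto
    hence "real (d (Suc (i + P))) \<le> real b - 1" by linarith
    thus ?thesis unfolding f_def using bpos by (simp add: divide_right_mono)
  qed
  have "x - sum f {..<P} \<le> 1 / real b ^ P"
    by (rule sums_le[OF le tail geom_tail_sums[OF b]])
  thus "x - (\<Sum>i<P. real (d (Suc i)) / real b ^ Suc i) \<le> 1 / real b ^ P"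
    unfolding f_def by simp
qed

lemma aux_div:
  fixes B c x s :: real
  assumes B: "B > 0" and h1: "0 < x - (s + c / B)" and h2: "x - (s + c / B) \<le> 1 / B"
  shows "c < (x - s) * B" "(x - s) * B \<le> c + 1"
proof -
  have "c / B < x - s" using h1 by simp
  thus "c < (x - s) * B" using pos_divide_less_eq[OF B] by blast
  have "x - s \<le> (c + 1) / B" using h2 by (simp add: add_divide_distrib)
  thus "(x - s) * B \<le> c + 1" using pos_le_divide_eq[OF B] by blast
qed

lemma expansion_unique:
  assumes b: "b \<ge> (2::nat)" and e1: "nonterm_expansion b x d" and e2: "nonterm_expansion b x d'"
  shows "d = d'"
proof -
  have bpos: "real b > 1" using b by auto
  have "\<forall>i\<le>n. d i = d' i" for n
  proof (induction n)
    case 0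
    then show ?case using e1 e2 unfolding nonterm_expansion_def by auto
  next
    case (Suc m)
    define s where "s = (\<Sum>i<m. real (d (Suc i)) / real b ^ Suc i)"
    have s': "s = (\<Sum>i<m. real (d' (Suc i)) / real b ^ Suc i)"
      unfolding s_def using Suc.IH by (intro sum.cong) auto
    have A1: "0 < x - (s + real (d (Suc m)) / real b ^ Suc m)"
         "x - (s + real (d (Suc m)) / real b ^ Suc m) \<le> 1 / real b ^ Suc m"
      using expansion_tail[OF b e1, of "Suc m"] unfolding s_def by auto
    have A2: "0 < x - (s + real (d' (Suc m)) / real b ^ Suc m)"
         "x - (s + real (d' (Suc m)) / real b ^ Suc m) \<le> 1 / real b ^ Suc m"
      using expansion_tail[OF b e2, of "Suc m"] unfolding s' by auto
    define y where "y = (x - s) * real b ^ Suc m"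
    have bp: "real b ^ Suc m > 0" using bpos by auto
    have "real (d (Suc m)) < y" "y \<le> real (d (Suc m)) + 1"
         "real (d' (Suc m)) < y" "y \<le> real (d' (Suc m)) + 1"
      using aux_div[OF bp A1] aux_div[OF bp A2] unfolding y_def by auto
    hence "d (Suc m) = d' (Suc m)" by linarith
    thus ?case using Suc.IH le_Suc_eq by auto
  qed
  thus ?thesis by auto
qed

lemma expansion_exists:
  assumes b: "b \<ge> (2::nat)" and x: "0 < x" "x \<le> 1"
  shows "\<exists>d. nonterm_expansion b x d"
proof -
  have bpos: "real b > 1" using b by auto
  define A where "A n = \<lceil>x * real b ^ n\<rceil> - 1" for n
  have A1: "of_int (A n) < x * real b ^ n" for n unfolding A_def by linarith
  have A2: "x * real b ^ n \<le> of_int (A n) + 1" for n unfolding A_def by linarith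
  have A0: "A 0 = 0" unfolding A_def using x by (simp add: ceiling_eq_iff)
  have Astep1: "int b * A n \<le> A (Suc n)" for n
  proof -
    have "real b * of_int (A n) < x * real b ^ Suc n" using A1[of n] bpos by simp
    hence "real b * of_int (A n) < of_int (A (Suc n)) + 1" using A2[of "Suc n"] by linarith
    hence "real_of_int (int b * A n) < real_of_int (A (Suc n) + 1)" by simp
    hence "int b * A n < A (Suc n) + 1" by (simp only: of_int_less_iff)
    thus ?thesis by linarith
  qed
  have Astep2: "A (Suc n) \<le> int b * A n + (int b - 1)" for n
  proof -
    have "x * real b ^ Suc n \<le> real b * (of_int (A n) + 1)" using A2[of n] bpos by simp
    hence "of_int (A (Suc n)) < real b * of_int (A n) + real b" using A1[of "Suc n"] by (simp add: algebra_simps)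
    hence "real_of_int (A (Suc n)) < real_of_int (int b * A n + int b)" by simp
    hence "A (Suc n) < int b * A n + int b" by (simp only: of_int_less_iff)
    thus ?thesis by linarith
  qed
  define d where "d n = (if n = 0 then 0 else nat (A n - int b * A (n - 1)))" for n
  have dS: "real (d (Suc n)) = of_int (A (Suc n)) - real b * of_int (A n)" for n
    using Astep1[of n] unfolding d_def by simp
  have dlt: "d n < b" for n
  proof (cases n)
    case (Suc m)
    have "A (Suc m) - int b * A m < int b" using Astep2[of m] by linarith
    thus ?thesis using Suc b unfolding d_def by auto
  qed (use b d_def in auto)
  have ps: "(\<Sum>i<n. real (d (Suc i)) / real b ^ Suc i) = of_int (A n) / real b ^ n" for n
  proof (induction n)
    case 0 then show ?case using A0 by simp
  next
    case (Suc n)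
    have "(\<Sum>i<Suc n. real (d (Suc i)) / real b ^ Suc i) =
          of_int (A n) / real b ^ n + (of_int (A (Suc n)) - real b * of_int (A n)) / real b ^ Suc n"
      using Suc dS by simp
    also have "\<dots> = of_int (A (Suc n)) / real b ^ Suc n" using bpos by (simp add: field_simps)
    finally show ?case .
  qed
  have bnd: "\<bar>of_int (A n) / real b ^ n - x\<bar> \<le> 1 / real b ^ n" for n
  proof -
    have bp: "real b ^ n > 0" using bpos by auto
    have "of_int (A n) / real b ^ n < x" "x \<le> (of_int (A n) + 1) / real b ^ n"
      using A1[of n] A2[of n] bp by (auto simp: field_simps)
    thus ?thesis by (simp add: add_divide_distrib abs_if)
  qed
  have lim0: "(\<lambda>n. 1 / real b ^ n) \<longlonglongrightarrow> 0"
    using LIMSEQ_inverse_realpow_zero[of "real b"] bpos by (simp add: divide_inverse)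
  have conv: "(\<lambda>n. of_int (A n) / real b ^ n) \<longlonglongrightarrow> x"
  proof -
    have "(\<lambda>n. of_int (A n) / real b ^ n - x) \<longlonglongrightarrow> 0"
      by (rule Lim_null_comparison[OF _ lim0]) (use bnd in auto)
    thus ?thesis by (simp add: LIM_zero_iff)
  qed
  have sm: "(\<lambda>n. real (d (Suc n)) / real b ^ Suc n) sums x"
    unfolding sums_def using conv ps by simp
  have inf: "infinite {n. d n \<noteq> 0}"
  proof
    assume "finite {n. d n \<noteq> 0}"
    then obtain n0 where n0: "\<forall>n. d n \<noteq> 0 \<longrightarrow> n < n0" unfolding finite_nat_set_iff_bounded by auto
    have const: "of_int (A (n0 + m)) / real b ^ (n0 + m) = of_int (A n0) / real b ^ n0" for m
    proof -
      have "(\<Sum>i<n0 + m. real (d (Suc i)) / real b ^ Suc i) = (\<Sum>i<n0. real (d (Suc i)) / real b ^ Suc i)"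
      proof (induction m)
        case (Suc m)
        have "\<not> Suc (n0 + m) < n0" by simp
        hence "d (Suc (n0 + m)) = 0" using n0 by blast
        thus ?case using Suc by simp
      qed simp
      thus ?thesis using ps by simp
    qed
    have gap: "x - of_int (A n0) / real b ^ n0 > 0" using A1[of n0] bpos by (simp add: field_simps)
    obtain m where m: "(1 / real b) ^ m < x - of_int (A n0) / real b ^ n0"
      using real_arch_pow_inv[OF gap, of "1 / real b"] bpos by auto
    have "x \<le> of_int (A (n0 + m)) / real b ^ (n0 + m) + 1 / real b ^ (n0 + m)"
      using A2[of "n0 + m"] bpos by (simp add: field_simps)
    also have "\<dots> = of_int (A n0) / real b ^ n0 + 1 / real b ^ (n0 + m)" using const by simp
    also have "1 / real b ^ (n0 + m) \<le> (1 / real b) ^ m"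
      using bpos by (simp add: power_add power_one_over field_simps)
    finally show False using m by simp
  qed
  have "nonterm_expansion b x d"
    unfolding nonterm_expansion_def using sm inf dlt by (simp add: d_def)
  thus ?thesis by blast
qed

lemma digit_expansion:
  assumes b: "b \<ge> (2::nat)" and x: "0 < x" "x \<le> 1"
  shows "nonterm_expansion b x (digit b x)"
proof -
  have "\<exists>!d. nonterm_expansion b x d"
    using expansion_exists[OF b x] expansion_unique[OF b] by blast
  thus ?thesis unfolding digit_def by (rule theI')
qed

lemma digit_eqI:
  assumes b: "b \<ge> (2::nat)" and e: "nonterm_expansion b x d" and x: "0 < x" "x \<le> 1"
  shows "digit b x = d"
  using expansion_unique[OF b digit_expansion[OF b x] e] .

lemma partial_le:
  assumes b: "b \<ge> (2::nat)" and e: "\<forall>i<P. e (Suc i) < b"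
  shows "(\<Sum>i<P. real (e (Suc i)) / real b ^ Suc i) \<le> 1 - 1 / real b ^ P"
  using e
proof (induction P)
  case 0 then show ?case by simp
next
  case (Suc P)
  have bpos: "real b > 1" using b by auto
  have "e (Suc P) < b" using Suc.prems by auto
  hence eb: "real (e (Suc P)) \<le> real b - 1" by linarith
  have "(\<Sum>i<Suc P. real (e (Suc i)) / real b ^ Suc i) \<le> 1 - 1 / real b ^ P + (real b - 1) / real b ^ Suc P"
    using Suc bpos eb by (simp add: divide_right_mono add_mono)
  also have "\<dots> = 1 - 1 / real b ^ Suc P" using bpos by (simp add: field_simps)
  finally show ?case .
qed

lemma cylinder_digits:
  assumes b: "b \<ge> (2::nat)" and e: "\<forall>i<P. e (Suc i) < b"
    and v: "v = (\<Sum>i<P. real (e (Suc i)) / real b ^ Suc i)"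
    and x: "v < x" "x < v + 1 / real b ^ P"
  shows "\<forall>i<P. digit b x (Suc i) = e (Suc i)"
proof -
  have bpos: "real b > 1" using b by auto
  have bP: "real b ^ P > 0" using bpos by auto
  have v0: "0 \<le> v" unfolding v by (auto intro!: sum_nonneg)
  have v1: "v + 1 / real b ^ P \<le> 1" using partial_le[OF b e] v by simp
  define y where "y = real b ^ P * (x - v)"
  have y0: "0 < y" unfolding y_def using x bP by auto
  have y1: "y < 1" unfolding y_def using x bP by (simp add: field_simps)
  obtain ey where ey: "nonterm_expansion b y ey" using expansion_exists[OF b y0] y1 by auto
  define d' where "d' m = (if m = 0 then 0 else if m \<le> P then e m else ey (m - P))" for m
  define f where "f i = real (d' (Suc i)) / real b ^ Suc i" for i
  have "(\<lambda>i. real (ey (Suc i)) / real b ^ Suc i) sums y" using ey unfolding nonterm_expansion_def by auto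
  hence "(\<lambda>i. (1 / real b ^ P) * (real (ey (Suc i)) / real b ^ Suc i)) sums ((1 / real b ^ P) * y)"
    by (rule sums_mult)
  moreover have "(1 / real b ^ P) * (real (ey (Suc i)) / real b ^ Suc i) = f (i + P)" for i
    unfolding f_def d'_def by (simp add: power_add field_simps)
  moreover have "(1 / real b ^ P) * y = x - v" unfolding y_def using bP by simp
  ultimately have "(\<lambda>i. f (i + P)) sums (x - v)" by simp
  moreover have "sum f {..<P} = v" unfolding v f_def d'_def by (intro sum.cong) auto
  ultimately have fs: "f sums x" using sums_iff_shift[of f P "x - v"] by simp
  have dlt: "d' m < b" for m
    using e ey b unfolding d'_def nonterm_expansion_def
    by (cases "m = 0"; cases "m \<le> P") (auto, metis Suc_pred le_simps(3) not_gr0 not_le)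
  have inf: "infinite {m. d' m \<noteq> 0}"
  proof
    assume fin: "finite {m. d' m \<noteq> 0}"
    have "{m. ey m \<noteq> 0} \<subseteq> (\<lambda>m. m - P) ` {m. d' m \<noteq> 0}"
    proof
      fix m assume m: "m \<in> {m. ey m \<noteq> 0}"
      hence "m \<noteq> 0" using ey unfolding nonterm_expansion_def by (cases m) auto
      hence "d' (m + P) = ey m" unfolding d'_def by auto
      hence "m + P \<in> {m. d' m \<noteq> 0}" using m by auto
      thus "m \<in> (\<lambda>m. m - P) ` {m. d' m \<noteq> 0}" by force
    qed
    hence "finite {m. ey m \<noteq> 0}" using fin finite_subset by blast
    thus False using ey unfolding nonterm_expansion_def by auto
  qed
  have "nonterm_expansion b x d'"
    unfolding nonterm_expansion_def using fs inf dlt unfolding f_def by (auto simp: d'_def)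
  hence "digit b x = d'" using digit_eqI[OF b] x v0 v1 by auto
  thus ?thesis unfolding d'_def by auto
qed

lemma prefix_close:
  assumes b: "b \<ge> (2::nat)" and x: "0 < x" "x \<le> 1" and x': "0 < x'" "x' \<le> 1"
    and eq: "\<forall>i<P. digit b x (Suc i) = digit b x' (Suc i)"
  shows "\<bar>x - x'\<bar> < 1 / real b ^ P"
proof -
  define v where "v = (\<Sum>i<P. real (digit b x (Suc i)) / real b ^ Suc i)"
  have v': "v = (\<Sum>i<P. real (digit b x' (Suc i)) / real b ^ Suc i)"
    unfolding v_def using eq by (intro sum.cong) auto
  have "0 < x - v" "x - v \<le> 1 / real b ^ P"
    using expansion_tail[OF b digit_expansion[OF b x]] unfolding v_def by auto
  moreover have "0 < x' - v" "x' - v \<le> 1 / real b ^ P"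
    using expansion_tail[OF b digit_expansion[OF b x']] unfolding v' by auto
  ultimately show ?thesis by linarith
qed

lemma sum_lessThan_add: "(\<Sum>i<m + (n::nat). f i) = (\<Sum>i<m. f i) + (\<Sum>i<n. f (m + i))"
  by (induction n) (auto simp: add.assoc)

lemma sum_periodic:
  fixes F :: "nat \<Rightarrow> real"
  shows "(\<Sum>t<q * L. F (t mod L)) = real q * (\<Sum>t<L. F t)"
proof (induction q)
  case (Suc q)
  have "(\<Sum>t<Suc q * L. F (t mod L)) = (\<Sum>t<q * L. F (t mod L)) + (\<Sum>t<L. F ((q * L + t) mod L))"
    using sum_lessThan_add[of "\<lambda>t. F (t mod L)" "q * L" L] by (simp add: add.commute)
  also have "(\<Sum>t<L. F ((q * L + t) mod L)) = (\<Sum>t<L. F t)" by (intro sum.cong) auto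
  finally show ?case using Suc by (simp add: algebra_simps)
qed simp

lemma sum_periodic_bounds:
  fixes F :: "nat \<Rightarrow> real"
  assumes L: "L > 0" and F0: "\<And>t. F t \<ge> 0"
  shows "real (m div L) * (\<Sum>t<L. F t) \<le> (\<Sum>t<m. F (t mod L))"
    and "(\<Sum>t<m. F (t mod L)) \<le> real (m div L) * (\<Sum>t<L. F t) + (\<Sum>t<L. F t)"
proof -
  define q r where "q = m div L" and "r = m mod L"
  have m: "m = q * L + r" unfolding q_def r_def by simp
  have rL: "r < L" unfolding r_def using L by simp
  have eq: "(\<Sum>t<m. F (t mod L)) = real q * (\<Sum>t<L. F t) + (\<Sum>t<r. F t)"
  proof -
    have "(\<Sum>t<m. F (t mod L)) = (\<Sum>t<q * L. F (t mod L)) + (\<Sum>t<r. F ((q * L + t) mod L))"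
      unfolding m by (rule sum_lessThan_add)
    also have "(\<Sum>t<r. F ((q * L + t) mod L)) = (\<Sum>t<r. F t)"
      using rL by (intro sum.cong) auto
    finally show ?thesis using sum_periodic by simp
  qed
  have "0 \<le> (\<Sum>t<r. F t)" using F0 by (auto intro: sum_nonneg)
  moreover have "(\<Sum>t<r. F t) \<le> (\<Sum>t<L. F t)" using rL F0 by (intro sum_mono2) auto
  ultimately show "real (m div L) * (\<Sum>t<L. F t) \<le> (\<Sum>t<m. F (t mod L))"
    and "(\<Sum>t<m. F (t mod L)) \<le> real (m div L) * (\<Sum>t<L. F t) + (\<Sum>t<L. F t)"
    using eq unfolding q_def by auto
qed

definition win :: "nat list \<Rightarrow> nat \<Rightarrow> nat \<Rightarrow> nat list" where
  "win w k t = map (\<lambda>j. w ! ((t + j) mod length w)) [0..<k]"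

definition cnt :: "nat list \<Rightarrow> nat list \<Rightarrow> real" where
  "cnt w s = (\<Sum>t<length w. if win w (length s) t = s then 1 else 0)"

definition rep :: "nat \<Rightarrow> nat list \<Rightarrow> nat list" where
  "rep m u = map (\<lambda>p. u ! (p mod length u)) [0..<m * length u]"

lemma length_win[simp]: "length (win w k t) = k" unfolding win_def by simp

lemma win_nth: "j < k \<Longrightarrow> win w k t ! j = w ! ((t + j) mod length w)"
  unfolding win_def by simp

lemma win_mod: "win w k (t mod length w) = win w k t"
  unfolding win_def by (intro map_cong) (auto simp: mod_add_left_eq)

lemma cnt_nonneg: "0 \<le> cnt w s" unfolding cnt_def by (auto intro: sum_nonneg)

lemma cnt_le: "cnt w s \<le> real (length w)"
proof -
  have "cnt w s \<le> (\<Sum>t<length w. 1)" unfolding cnt_def by (intro sum_mono) auto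
  thus ?thesis by simp
qed

lemma cnt_pos_win:
  assumes "cnt w s > 0" shows "\<exists>t<length w. win w (length s) t = s"
proof (rule ccontr)
  assume "\<not> ?thesis"
  hence "cnt w s = 0" unfolding cnt_def by (intro sum.neutral) auto
  thus False using assms by simp
qed

lemma win_in_strings:
  assumes "set w \<subseteq> {..<b}" "w \<noteq> []"
  shows "win w k t \<in> strings b k"
proof -
  have "w ! ((t + j) mod length w) \<in> set w" for j using assms(2) by auto
  thus ?thesis using assms(1) unfolding strings_def win_def by auto
qed

lemma sum_cnt_strings:
  assumes "set w \<subseteq> {..<b}" "w \<noteq> []" "finite (strings b k)"
  shows "(\<Sum>s\<in>strings b k. cnt w s) = real (length w)"
proof -
  have "(\<Sum>s\<in>strings b k. cnt w s) = (\<Sum>s\<in>strings b k. \<Sum>t<length w. if win w k t = s then 1 else 0)"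
    unfolding cnt_def by (intro sum.cong) (auto simp: strings_def)
  also have "\<dots> = (\<Sum>t<length w. \<Sum>s\<in>strings b k. if win w k t = s then 1 else 0)"
    by (rule sum.swap)
  also have "\<dots> = (\<Sum>t<length w. 1)"
    using win_in_strings[OF assms(1,2)] assms(3) by (intro sum.cong) (auto simp: sum.delta)
  finally show ?thesis by simp
qed

lemma finite_strings: "finite (strings b k)"
proof -
  have "strings b k = {xs. set xs \<subseteq> {..<b} \<and> length xs = k}" unfolding strings_def by auto
  thus ?thesis using finite_lists_length_eq[of "{..<b}" k] by simp
qed

lemma sum_indicator_letter:
  assumes "x < (b::nat)"
  shows "(\<Sum>c<b. if x = c then (1::real) else 0) = 1"
  using assms by simp

lemma win_Suc_snoc: "win w (Suc n) t = win w n t @ [w ! ((t + n) mod length w)]"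
  unfolding win_def by simp

lemma win_Suc_cons: "win w (Suc n) t = w ! (t mod length w) # win w n (Suc t)"
  unfolding win_def by (simp add: upt_conv_Cons map_Suc_upt[symmetric] del: upt_Suc)

lemma cnt_snoc:
  assumes "set w \<subseteq> {..<b}" "w \<noteq> []"
  shows "(\<Sum>c<b. cnt w (s @ [c])) = cnt w s"
proof -
  let ?L = "length w"
  have letter: "w ! ((t + length s) mod ?L) < b" for t
    using assms by (metis lessThan_iff length_greater_0_conv mod_less_divisor nth_mem subsetD)
  have "(\<Sum>c<b. cnt w (s @ [c])) = (\<Sum>c<b. \<Sum>t<?L. if win w (length s) t = s \<and> w ! ((t + length s) mod ?L) = c then 1 else 0)"
    unfolding cnt_def by (intro sum.cong refl) (auto simp: win_Suc_snoc)
  also have "\<dots> = (\<Sum>t<?L. \<Sum>c<b. if win w (length s) t = s \<and> w ! ((t + length s) mod ?L) = c then 1 else 0)"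
    by (rule sum.swap)
  also have "\<dots> = (\<Sum>t<?L. if win w (length s) t = s then 1 else 0)"
  proof (intro sum.cong refl)
    fix t
    show "(\<Sum>c<b. if win w (length s) t = s \<and> w ! ((t + length s) mod ?L) = c then 1 else 0) =
          (if win w (length s) t = s then (1::real) else 0)"
      using sum_indicator_letter[OF letter[of t]] by auto
  qed
  finally show ?thesis unfolding cnt_def .
qed

lemma sum_shift_periodic:
  fixes F :: "nat \<Rightarrow> real"
  assumes "F L = F 0"
  shows "(\<Sum>t<L. F (Suc t)) = (\<Sum>t<L. F t)"
proof -
  have "(\<Sum>t<Suc L. F t) = F 0 + (\<Sum>t<L. F (Suc t))" by (rule sum.lessThan_Suc_shift)
  moreover have "(\<Sum>t<Suc L. F t) = (\<Sum>t<L. F t) + F L" by simp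
  ultimately show ?thesis using assms by simp
qed

lemma cnt_cons:
  assumes "set w \<subseteq> {..<b}" "w \<noteq> []"
  shows "(\<Sum>c<b. cnt w (c # s)) = cnt w s"
proof -
  let ?L = "length w"
  have letter: "w ! (t mod ?L) < b" for t
    using assms by (metis lessThan_iff length_greater_0_conv mod_less_divisor nth_mem subsetD)
  have "(\<Sum>c<b. cnt w (c # s)) = (\<Sum>c<b. \<Sum>t<?L. if w ! (t mod ?L) = c \<and> win w (length s) (Suc t) = s then 1 else 0)"
    unfolding cnt_def by (intro sum.cong refl) (auto simp: win_Suc_cons)
  also have "\<dots> = (\<Sum>t<?L. \<Sum>c<b. if w ! (t mod ?L) = c \<and> win w (length s) (Suc t) = s then 1 else 0)"
    by (rule sum.swap)
  also have "\<dots> = (\<Sum>t<?L. if win w (length s) (Suc t) = s then 1 else 0)"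
  proof (intro sum.cong refl)
    fix t
    show "(\<Sum>c<b. if w ! (t mod ?L) = c \<and> win w (length s) (Suc t) = s then 1 else 0) =
          (if win w (length s) (Suc t) = s then (1::real) else 0)"
      using sum_indicator_letter[OF letter[of t]] by auto
  qed
  also have "\<dots> = (\<Sum>t<?L. if win w (length s) t = s then 1 else 0)"
  proof (rule sum_shift_periodic)
    have "win w (length s) ?L = win w (length s) 0" using win_mod[of w "length s" ?L] by simp
    thus "(if win w (length s) ?L = s then (1::real) else 0) = (if win w (length s) 0 = s then 1 else 0)"
      by simp
  qed
  finally show ?thesis unfolding cnt_def .
qed

lemma cnt_balanced:
  assumes "set w \<subseteq> {..<b}" "w \<noteq> []"
  shows "(\<Sum>c<b. cnt w (c # s)) = (\<Sum>c<b. cnt w (s @ [c]))"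
  using cnt_cons[OF assms] cnt_snoc[OF assms] by simp

lemma length_rep[simp]: "length (rep m u) = m * length u" unfolding rep_def by simp

lemma set_rep: "set (rep m u) \<subseteq> set u"
proof
  fix x assume "x \<in> set (rep m u)"
  then obtain p where p: "p < m * length u" and x: "x = u ! (p mod length u)"
    unfolding rep_def by auto
  have "length u > 0" using p by (cases "length u") auto
  hence "p mod length u < length u" by simp
  thus "x \<in> set u" using x by simp
qed

lemma cnt_rep:
  assumes "u \<noteq> []"
  shows "cnt (rep m u) s = real m * cnt u s"
proof -
  let ?L = "length u"
  have L: "?L > 0" using assms by auto
  have "win (rep m u) (length s) t = win u (length s) (t mod ?L)" if t: "t < m * ?L" for t
  proof -
    have mpos: "m * ?L > 0" using t by linarith
    show ?thesis
    proof (rule nth_equalityI)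
      fix j assume "j < length (win (rep m u) (length s) t)"
      hence j: "j < length s" by simp
      have "win (rep m u) (length s) t ! j = rep m u ! ((t + j) mod (m * ?L))"
        using j by (simp add: win_nth)
      also have "\<dots> = u ! (((t + j) mod (m * ?L)) mod ?L)"
        unfolding rep_def using mpos by simp
      also have "\<dots> = u ! ((t + j) mod ?L)" by (simp add: mod_mod_cancel)
      also have "\<dots> = win u (length s) (t mod ?L) ! j"
        using j by (simp add: win_nth mod_add_left_eq)
      finally show "win (rep m u) (length s) t ! j = win u (length s) (t mod ?L) ! j" .
    qed simp
  qed
  hence "cnt (rep m u) s = (\<Sum>t<m * ?L. (\<lambda>t'. if win u (length s) t' = s then 1 else 0) (t mod ?L))"
    unfolding cnt_def by (intro sum.cong) auto
  also have "\<dots> = real m * cnt u s" unfolding cnt_def by (rule sum_periodic)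
  finally show ?thesis .
qed

lemma sum_close:
  fixes f g :: "nat \<Rightarrow> real"
  assumes eq: "\<And>t. t + k \<le> n \<Longrightarrow> f t = g t" and b: "\<And>t. \<bar>f t - g t\<bar> \<le> 1"
  shows "\<bar>(\<Sum>t<n. f t) - (\<Sum>t<n. g t)\<bar> \<le> real k"
proof -
  have "\<bar>(\<Sum>t<n. f t) - (\<Sum>t<n. g t)\<bar> = \<bar>\<Sum>t<n. f t - g t\<bar>" by (simp add: sum_subtractf)
  also have "\<dots> \<le> (\<Sum>t<n. \<bar>f t - g t\<bar>)" by (rule sum_abs)
  also have "\<dots> \<le> (\<Sum>t<n. if t \<in> {n - k..<n} then 1 else 0)"
    using eq b by (intro sum_mono) auto
  also have "\<dots> = (\<Sum>t\<in>{..<n} \<inter> {n - k..<n}. 1)"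
    by (rule sum.inter_restrict[symmetric], simp)
  also have "\<dots> = real (card ({..<n} \<inter> {n - k..<n}))" by simp
  also have "card ({..<n} \<inter> {n - k..<n}) \<le> k"
  proof -
    have "card ({..<n} \<inter> {n - k..<n}) \<le> card {n - k..<n}" by (intro card_mono) auto
    thus ?thesis by simp
  qed
  finally show ?thesis by simp
qed

lemma win_append_left:
  assumes "t + k \<le> length u"
  shows "win (u @ v) k t = win u k t"
proof (rule nth_equalityI)
  fix j assume "j < length (win (u @ v) k t)"
  hence j: "j < k" by simp
  have "t + j < length u" using j assms by simp
  thus "win (u @ v) k t ! j = win u k t ! j" using j by (simp add: win_nth nth_append)
qed simp

lemma win_append_right:
  assumes "t + k \<le> length v"
  shows "win (u @ v) k (length u + t) = win v k t"
proof (rule nth_equalityI)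
  fix j assume "j < length (win (u @ v) k (length u + t))"
  hence j: "j < k" by simp
  have "t + j < length v" using j assms by simp
  thus "win (u @ v) k (length u + t) ! j = win v k t ! j" using j
    by (simp add: win_nth nth_append add.assoc)
qed simp

lemma cnt_append:
  "\<bar>cnt (u @ v) s - cnt u s - cnt v s\<bar> \<le> 2 * real (length s)"
proof -
  let ?k = "length s"
  define G where "G t = (if win (u @ v) ?k t = s then 1 else (0::real))" for t
  have "cnt (u @ v) s = (\<Sum>t<length u + length v. G t)" unfolding cnt_def G_def by simp
  also have "\<dots> = (\<Sum>t<length u. G t) + (\<Sum>t<length v. G (length u + t))" by (rule sum_lessThan_add)
  finally have c: "cnt (u @ v) s = (\<Sum>t<length u. G t) + (\<Sum>t<length v. G (length u + t))" .
  have 1: "\<bar>(\<Sum>t<length u. G t) - cnt u s\<bar> \<le> real ?k"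
    unfolding cnt_def G_def by (rule sum_close) (auto simp: win_append_left)
  have 2: "\<bar>(\<Sum>t<length v. G (length u + t)) - cnt v s\<bar> \<le> real ?k"
    unfolding cnt_def G_def by (rule sum_close) (auto simp: win_append_right)
  show ?thesis using c 1 2 by linarith
qed

lemma find_cycle:
  fixes p :: "nat list \<Rightarrow> real"
  assumes k: "k \<ge> 1" and nn: "\<forall>s\<in>strings b k. p s \<ge> 0"
    and bal: "\<forall>s\<in>strings b (k - 1). (\<Sum>c<b. p (c # s)) = (\<Sum>c<b. p (s @ [c]))"
    and s0: "s0 \<in> strings b k" "p s0 > 0"
  shows "\<exists>w. w \<noteq> [] \<and> set w \<subseteq> {..<b} \<and> (\<forall>t<length w. p (win w k t) > 0)"
proof -
  define Good where "Good = {s\<in>strings b k. p s > 0}"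
  have succ: "\<exists>s'. s' \<in> Good \<and> (\<exists>c. s' = tl s @ [c])" if "s \<in> Good" for s
  proof -
    from that have s: "length s = k" "set s \<subseteq> {..<b}" "p s > 0" by (auto simp: Good_def strings_def)
    obtain h t where hs: "s = h # t" using s k by (cases s) auto
    have hb: "h < b" using s hs by auto
    have tS: "t \<in> strings b (k - 1)" using s hs by (auto simp: strings_def)
    have cS: "c # t \<in> strings b k" if "c < b" for c using that tS k by (auto simp: strings_def)
    have "p (h # t) \<le> (\<Sum>c<b. p (c # t))"
      using member_le_sum[of h "{..<b}" "\<lambda>c. p (c # t)"] hb cS nn by auto
    hence pos: "(\<Sum>c<b. p (t @ [c])) > 0" using bal tS s hs by auto
    obtain c where c: "c < b" "p (t @ [c]) > 0"
    proof (rule ccontr)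
      assume "\<not> thesis"
      hence "\<forall>c<b. p (t @ [c]) \<le> 0" using that by force
      hence "(\<Sum>c<b. p (t @ [c])) \<le> 0" by (intro sum_nonpos) auto
      thus False using pos by simp
    qed
    have "t @ [c] \<in> Good" using c tS k unfolding Good_def strings_def by auto
    thus ?thesis using hs by auto
  qed
  define G where "G s = (SOME s'. s' \<in> Good \<and> (\<exists>c. s' = tl s @ [c]))" for s
  have G: "G s \<in> Good \<and> (\<exists>c. G s = tl s @ [c])" if "s \<in> Good" for s
    unfolding G_def using someI_ex[OF succ[OF that]] .
  define seq where "seq n = (G ^^ n) s0" for n
  have seqS: "seq (Suc n) = G (seq n)" for n by (simp add: seq_def)
  have s0G: "s0 \<in> Good" using s0 unfolding Good_def by auto
  have seqG: "seq n \<in> Good" for n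
    by (induction n) (use s0G G in \<open>auto simp: seq_def\<close>)
  have finG: "finite Good" unfolding Good_def using finite_strings by auto
  have "\<not> inj seq"
  proof
    assume "inj seq"
    hence "infinite (range seq)" using range_inj_infinite by blast
    moreover have "range seq \<subseteq> Good" using seqG by auto
    ultimately show False using finG finite_subset by blast
  qed
  then obtain x y where xy: "x \<noteq> y" "seq x = seq y" unfolding inj_def by auto
  obtain i j where ij: "i < j" "seq i = seq j"
  proof (cases "x < y")
    case True thus ?thesis using that xy by blast
  next
    case False hence "y < x" using xy by simp
    thus ?thesis using that xy by metis
  qed
  define L where "L = j - i"
  have L: "L > 0" using ij unfolding L_def by auto
  have shift: "seq (n + m) = (G ^^ m) (seq n)" for n m
    by (simp add: seq_def funpow_add add.commute)
  have per: "seq (i + L + m) = seq (i + m)" for m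
  proof -
    have "seq (i + L + m) = (G ^^ m) (seq j)" using shift[of "i + L" m] ij unfolding L_def by simp
    also have "\<dots> = seq (i + m)" using shift[of i m] ij by simp
    finally show ?thesis .
  qed
  have per2: "seq (i + q * L + r) = seq (i + r)" for q r
  proof (induction q)
    case (Suc q)
    have "seq (i + Suc q * L + r) = seq (i + L + (q * L + r))" by (simp add: algebra_simps)
    also have "\<dots> = seq (i + (q * L + r))" by (rule per)
    finally show ?case using Suc by (simp add: add.assoc)
  qed simp
  have per3: "seq (i + m) = seq (i + m mod L)" for m
    using per2[of "m div L" "m mod L"] by (simp add: add.assoc)
  define D where "D n = seq n ! 0" for n
  have lenseq: "length (seq n) = k" for n using seqG[of n] unfolding Good_def strings_def by auto
  have setseq: "set (seq n) \<subseteq> {..<b}" for n using seqG[of n] unfolding Good_def strings_def by auto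
  have tlprop: "seq (Suc n) ! t = seq n ! Suc t" if "Suc t < k" for n t
  proof -
    obtain c where c: "seq (Suc n) = tl (seq n) @ [c]" using G[OF seqG[of n]] seqS by auto
    have "t < length (tl (seq n))" using that lenseq[of n] by simp
    thus ?thesis using c by (simp add: nth_append nth_tl)
  qed
  have F1: "seq n ! t = D (n + t)" if "t < k" for n t
    using that
  proof (induction t arbitrary: n)
    case 0 then show ?case by (simp add: D_def)
  next
    case (Suc t)
    have "seq n ! Suc t = seq (Suc n) ! t" using tlprop[OF Suc.prems] by simp
    also have "\<dots> = D (Suc n + t)" using Suc by simp
    finally show ?case by simp
  qed
  define w where "w = map (\<lambda>t. D (i + t)) [0..<L]"
  have lw: "length w = L" unfolding w_def by simp
  have Db: "D n < b" for n
  proof -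
    have "seq n ! 0 \<in> set (seq n)" using lenseq[of n] k by (intro nth_mem) auto
    thus ?thesis using setseq[of n] unfolding D_def by auto
  qed
  have winw: "win w k t = seq (i + t)" if t: "t < L" for t
  proof (rule nth_equalityI)
    show "length (win w k t) = length (seq (i + t))" using lenseq by simp
    fix j' assume "j' < length (win w k t)"
    hence j': "j' < k" by simp
    have "win w k t ! j' = w ! ((t + j') mod L)" using j' lw by (simp add: win_nth)
    also have "\<dots> = D (i + (t + j') mod L)" unfolding w_def using L by simp
    also have "\<dots> = D (i + (t + j'))" unfolding D_def using per3[of "t + j'"] by simp
    also have "\<dots> = seq (i + t) ! j'" using F1[OF j', of "i + t"] by (simp add: add.assoc)
    finally show "win w k t ! j' = seq (i + t) ! j'" .
  qed
  show ?thesis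
  proof (intro exI conjI allI impI)
    show "w \<noteq> []" using lw L by auto
    show "set w \<subseteq> {..<b}" unfolding w_def using Db by auto
    fix t assume "t < length w"
    hence "t < L" using lw by simp
    thus "p (win w k t) > 0" using winw seqG unfolding Good_def by auto
  qed
qed

lemma cnt_ge1:
  assumes "t < length w" "win w (length s) t = s"
  shows "cnt w s \<ge> 1"
proof -
  have "(if win w (length s) t = s then 1 else (0::real)) \<le> cnt w s"
    unfolding cnt_def by (rule member_le_sum) (use assms in auto)
  thus ?thesis using assms by simp
qed

lemma decomp:
  assumes k: "k \<ge> 1"
  shows "\<forall>s\<in>strings b k. p s \<ge> 0 \<Longrightarrow>
    \<forall>s\<in>strings b (k - 1). (\<Sum>c<b. p (c # s)) = (\<Sum>c<b. p (s @ [c])) \<Longrightarrow>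
    \<exists>(R::nat) lam ws. (\<forall>r<R. lam r \<ge> 0 \<and> ws r \<noteq> [] \<and> set (ws r) \<subseteq> {..<b}) \<and>
        (\<forall>s\<in>strings b k. p s = (\<Sum>r<R. lam r * cnt (ws r) s))"
proof (induction "card {s\<in>strings b k. p s \<noteq> 0}" arbitrary: p rule: less_induct)
  case (less p)
  show ?case
  proof (cases "\<forall>s\<in>strings b k. p s = 0")
    case True
    show ?thesis
      apply (rule exI[where x="0::nat"])
      apply (rule exI[where x="\<lambda>_. 0::real"])
      apply (rule exI[where x="\<lambda>_. []"])
      using True by simp
  next
    case False
    then obtain s0 where s0': "s0 \<in> strings b k" "p s0 \<noteq> 0" by blast
    hence s0: "s0 \<in> strings b k" "p s0 > 0" using less.prems(1) by (auto simp: less_le)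
    obtain w where w: "w \<noteq> []" "set w \<subseteq> {..<b}" "\<forall>t<length w. p (win w k t) > 0"
      using find_cycle[OF k less.prems s0] by auto
    define Sw where "Sw = {s\<in>strings b k. cnt w s > 0}"
    have finSw: "finite Sw" unfolding Sw_def using finite_strings by auto
    have w0: "win w k 0 \<in> Sw"
    proof -
      have "cnt w (win w k 0) \<ge> 1" using cnt_ge1[of 0 w "win w k 0"] w(1) by simp
      thus ?thesis unfolding Sw_def using win_in_strings[OF w(2,1)] by auto
    qed
    have Swpos: "p s > 0" if "s \<in> Sw" for s
    proof -
      from that have "cnt w s > 0" "length s = k" unfolding Sw_def strings_def by auto
      then obtain t where "t < length w" "win w k t = s" using cnt_pos_win[of w s] by auto
      thus ?thesis using w(3) by auto
    qed
    define \<mu> where "\<mu> = Min ((\<lambda>s. p s / cnt w s) ` Sw)"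
    have "\<mu> \<in> (\<lambda>s. p s / cnt w s) ` Sw" unfolding \<mu>_def using finSw w0 by (intro Min_in) auto
    then obtain sm where sm: "sm \<in> Sw" "\<mu> = p sm / cnt w sm" by auto
    have \<mu>le: "\<mu> \<le> p s / cnt w s" if "s \<in> Sw" for s
      unfolding \<mu>_def using finSw that by (intro Min_le) auto
    have \<mu>pos: "\<mu> > 0" using sm Swpos[OF sm(1)] unfolding Sw_def by auto
    define p' where "p' s = p s - \<mu> * cnt w s" for s
    have nn': "\<forall>s\<in>strings b k. p' s \<ge> 0"
    proof
      fix s assume s: "s \<in> strings b k"
      show "p' s \<ge> 0"
      proof (cases "cnt w s > 0")
        case True
        hence "s \<in> Sw" using s unfolding Sw_def by auto
        hence "\<mu> \<le> p s / cnt w s" by (rule \<mu>le)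
        hence "\<mu> * cnt w s \<le> p s" using True by (simp add: pos_le_divide_eq)
        thus ?thesis unfolding p'_def by simp
      next
        case False
        hence "cnt w s = 0" using cnt_nonneg[of w s] by simp
        thus ?thesis unfolding p'_def using less.prems(1) s by simp
      qed
    qed
    have bal': "\<forall>s\<in>strings b (k - 1). (\<Sum>c<b. p' (c # s)) = (\<Sum>c<b. p' (s @ [c]))"
    proof
      fix s assume s: "s \<in> strings b (k - 1)"
      have "(\<Sum>c<b. p' (c # s)) = (\<Sum>c<b. p (c # s)) - \<mu> * (\<Sum>c<b. cnt w (c # s))"
        unfolding p'_def by (simp add: sum_subtractf sum_distrib_left)
      also have "\<dots> = (\<Sum>c<b. p (s @ [c])) - \<mu> * (\<Sum>c<b. cnt w (s @ [c]))"
        using less.prems(2) s cnt_balanced[OF w(2,1)] by simp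
      also have "\<dots> = (\<Sum>c<b. p' (s @ [c]))"
        unfolding p'_def by (simp add: sum_subtractf sum_distrib_left)
      finally show "(\<Sum>c<b. p' (c # s)) = (\<Sum>c<b. p' (s @ [c]))" .
    qed
    have sub: "{s\<in>strings b k. p' s \<noteq> 0} \<subset> {s\<in>strings b k. p s \<noteq> 0}"
    proof
      show "{s\<in>strings b k. p' s \<noteq> 0} \<subseteq> {s\<in>strings b k. p s \<noteq> 0}"
      proof safe
        fix s assume s: "s \<in> strings b k" "p' s \<noteq> 0" "p s = 0"
        have "\<not> cnt w s > 0" using Swpos s unfolding Sw_def by force
        hence "cnt w s = 0" using cnt_nonneg[of w s] by simp
        thus False using s unfolding p'_def by simp
      qed
      have "p' sm = 0" unfolding p'_def using sm unfolding Sw_def by auto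
      moreover have "p sm \<noteq> 0" using Swpos[OF sm(1)] by simp
      moreover have "sm \<in> strings b k" using sm unfolding Sw_def by auto
      ultimately show "{s\<in>strings b k. p' s \<noteq> 0} \<noteq> {s\<in>strings b k. p s \<noteq> 0}" by blast
    qed
    have "card {s\<in>strings b k. p' s \<noteq> 0} < card {s\<in>strings b k. p s \<noteq> 0}"
      by (rule psubset_card_mono) (use finite_strings sub in auto)
    then obtain R :: nat and lam ws where IH: "\<forall>r<R. lam r \<ge> 0 \<and> ws r \<noteq> [] \<and> set (ws r) \<subseteq> {..<b}"
      "\<forall>s\<in>strings b k. p' s = (\<Sum>r<R. lam r * cnt (ws r) s)"
      using less.hyps[of p', OF _ nn' bal'] by blast
    define lam' where "lam' r = (if r = R then \<mu> else lam r)" for r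
    define ws' where "ws' r = (if r = R then w else ws r)" for r
    show ?thesis
    proof (intro exI[of _ "Suc R"] exI[of _ lam'] exI[of _ ws'] conjI)
      show "\<forall>r<Suc R. lam' r \<ge> 0 \<and> ws' r \<noteq> [] \<and> set (ws' r) \<subseteq> {..<b}"
      proof (intro allI impI)
        fix r assume "r < Suc R"
        thus "lam' r \<ge> 0 \<and> ws' r \<noteq> [] \<and> set (ws' r) \<subseteq> {..<b}"
          using IH(1) \<mu>pos w unfolding lam'_def ws'_def by (cases "r = R") auto
      qed
    next
      show "\<forall>s\<in>strings b k. p s = (\<Sum>r<Suc R. lam' r * cnt (ws' r) s)"
      proof
      fix s assume s: "s \<in> strings b k"
      have "(\<Sum>r<Suc R. lam' r * cnt (ws' r) s) = (\<Sum>r<R. lam r * cnt (ws r) s) + \<mu> * cnt w s"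
        unfolding lam'_def ws'_def by simp
      also have "\<dots> = p s"
      proof -
        have "p' s = (\<Sum>r<R. lam r * cnt (ws r) s)" using IH(2) s by blast
        thus ?thesis unfolding p'_def by linarith
      qed
      finally show "p s = (\<Sum>r<Suc R. lam' r * cnt (ws' r) s)" by simp
      qed
    qed
  qed
qed

lemma cnt_Nil[simp]: "cnt [] s = 0" unfolding cnt_def by simp

lemma concat_rep_bound:
  fixes m :: "nat \<Rightarrow> nat" and ws :: "nat \<Rightarrow> nat list"
  assumes ne: "\<forall>r<R. ws r \<noteq> []"
  shows "R' \<le> R \<Longrightarrow> real (length (concat (map (\<lambda>r. rep (m r) (ws r)) [0..<R']))) =
            (\<Sum>r<R'. real (m r) * real (length (ws r))) \<and>
          (\<forall>s. \<bar>cnt (concat (map (\<lambda>r. rep (m r) (ws r)) [0..<R'])) s -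
                 (\<Sum>r<R'. real (m r) * cnt (ws r) s)\<bar> \<le> 2 * real (length s) * real R')"
proof (induction R')
  case 0 then show ?case by simp
next
  case (Suc R')
  define W where "W = concat (map (\<lambda>r. rep (m r) (ws r)) [0..<R'])"
  have WS: "concat (map (\<lambda>r. rep (m r) (ws r)) [0..<Suc R']) = W @ rep (m R') (ws R')"
    unfolding W_def by simp
  have IH: "real (length W) = (\<Sum>r<R'. real (m r) * real (length (ws r)))"
     "\<And>s. \<bar>cnt W s - (\<Sum>r<R'. real (m r) * cnt (ws r) s)\<bar> \<le> 2 * real (length s) * real R'"
    using Suc unfolding W_def by auto
  have neR: "ws R' \<noteq> []" using ne Suc.prems by auto
  show ?case
  proof (intro conjI allI)
    show "real (length (concat (map (\<lambda>r. rep (m r) (ws r)) [0..<Suc R']))) =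
        (\<Sum>r<Suc R'. real (m r) * real (length (ws r)))"
      unfolding WS using IH(1) by simp
    fix s
    have A: "\<bar>cnt (W @ rep (m R') (ws R')) s - cnt W s - cnt (rep (m R') (ws R')) s\<bar> \<le> 2 * real (length s)"
      by (rule cnt_append)
    have B: "cnt (rep (m R') (ws R')) s = real (m R') * cnt (ws R') s" by (rule cnt_rep[OF neR])
    have "\<bar>cnt (W @ rep (m R') (ws R')) s - (\<Sum>r<Suc R'. real (m r) * cnt (ws r) s)\<bar>
        \<le> 2 * real (length s) * real R' + 2 * real (length s)"
      using A B IH(2)[of s] by simp
    also have "\<dots> = 2 * real (length s) * real (Suc R')" by (simp add: algebra_simps)
    finally show "\<bar>cnt (concat (map (\<lambda>r. rep (m r) (ws r)) [0..<Suc R'])) s -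
        (\<Sum>r<Suc R'. real (m r) * cnt (ws r) s)\<bar> \<le> 2 * real (length s) * real (Suc R')"
      unfolding WS .
  qed
qed

lemma approx_word:
  assumes b: "b \<ge> 2" and k: "k \<ge> 1" and eta: "\<eta> \<in> Delta b k" and eps: "\<epsilon> > 0"
  shows "\<exists>w. w \<noteq> [] \<and> set w \<subseteq> {..<b} \<and>
           (\<forall>s\<in>strings b k. \<bar>cnt w s / real (length w) - \<eta> s\<bar> < \<epsilon>)"
proof -
  have nn: "\<forall>s\<in>strings b k. \<eta> s \<ge> 0" and sum1: "(\<Sum>s\<in>strings b k. \<eta> s) = 1"
    and bal: "\<forall>s\<in>strings b (k - 1). (\<Sum>c<b. \<eta> (c # s)) = (\<Sum>c<b. \<eta> (s @ [c]))"
    using eta unfolding Delta_def by auto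
  obtain R :: nat and lam ws where D1: "\<forall>r<R. lam r \<ge> 0 \<and> ws r \<noteq> [] \<and> set (ws r) \<subseteq> {..<b}"
    and D2: "\<forall>s\<in>strings b k. \<eta> s = (\<Sum>r<R. lam r * cnt (ws r) s)"
    using decomp[OF k nn bal] by blast
  define C where "C = (\<Sum>r<R. real (length (ws r)))"
  define K where "K = 2 * real k * real R"
  have C0: "C \<ge> 0" unfolding C_def by (auto intro: sum_nonneg)
  have K0: "K \<ge> 0" unfolding K_def by auto
  have lamsum: "(\<Sum>r<R. lam r * real (length (ws r))) = 1"
  proof -
    have "1 = (\<Sum>s\<in>strings b k. \<Sum>r<R. lam r * cnt (ws r) s)" using sum1 D2 by simp
    also have "\<dots> = (\<Sum>r<R. \<Sum>s\<in>strings b k. lam r * cnt (ws r) s)" by (rule sum.swap)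
    also have "\<dots> = (\<Sum>r<R. lam r * real (length (ws r)))"
    proof (intro sum.cong refl)
      fix r assume "r \<in> {..<R}"
      hence "ws r \<noteq> []" "set (ws r) \<subseteq> {..<b}" using D1 by auto
      thus "(\<Sum>s\<in>strings b k. lam r * cnt (ws r) s) = lam r * real (length (ws r))"
        using sum_cnt_strings[of "ws r" b k] finite_strings by (simp add: sum_distrib_left[symmetric])
    qed
    finally show ?thesis by simp
  qed
  have eta1: "\<eta> s \<le> 1" if "s \<in> strings b k" for s
    using member_le_sum[of s "strings b k" \<eta>] that nn sum1 finite_strings by auto
  obtain M :: nat where M: "real M > C + (2 * C + K) / \<epsilon>"
    using reals_Archimedean2 by blast
  define m where "m r = nat \<lfloor>lam r * real M\<rfloor>" for r
  have m1: "real (m r) \<le> lam r * real M" and m2: "lam r * real M - 1 < real (m r)" if "r < R" for r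
  proof -
    have "lam r * real M \<ge> 0" using D1 that by auto
    thus "real (m r) \<le> lam r * real M" "lam r * real M - 1 < real (m r)"
      unfolding m_def by linarith+
  qed
  define W where "W = concat (map (\<lambda>r. rep (m r) (ws r)) [0..<R])"
  have WB: "real (length W) = (\<Sum>r<R. real (m r) * real (length (ws r)))"
    "\<And>s. \<bar>cnt W s - (\<Sum>r<R. real (m r) * cnt (ws r) s)\<bar> \<le> 2 * real (length s) * real R"
    using concat_rep_bound[of R ws R m] D1 unfolding W_def by auto
  have LW1: "real (length W) \<le> real M"
  proof -
    have "real (length W) \<le> (\<Sum>r<R. lam r * real M * real (length (ws r)))"
      unfolding WB(1) using m1 by (intro sum_mono mult_right_mono) auto
    also have "\<dots> = real M * (\<Sum>r<R. lam r * real (length (ws r)))"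
      by (simp add: sum_distrib_left algebra_simps)
    finally show ?thesis using lamsum by simp
  qed
  have LW2: "real (length W) \<ge> real M - C"
  proof -
    have "(\<Sum>r<R. (lam r * real M - 1) * real (length (ws r))) \<le> real (length W)"
      unfolding WB(1) using m2 by (intro sum_mono mult_right_mono) (auto simp: less_imp_le)
    moreover have "(\<Sum>r<R. (lam r * real M - 1) * real (length (ws r))) =
        real M * (\<Sum>r<R. lam r * real (length (ws r))) - C"
      unfolding C_def by (simp add: sum_distrib_left algebra_simps sum_subtractf)
    ultimately show ?thesis using lamsum by simp
  qed
  have MC: "real M - C > 0"
  proof -
    have "(2 * C + K) / \<epsilon> \<ge> 0" using C0 K0 eps by auto
    thus ?thesis using M by linarith
  qed
  have LWpos: "real (length W) > 0" using LW2 MC by linarith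
  have cntW: "\<bar>cnt W s - real M * \<eta> s\<bar> \<le> C + K" if s: "s \<in> strings b k" for s
  proof -
    have ls: "length s = k" using s unfolding strings_def by auto
    have up: "(\<Sum>r<R. real (m r) * cnt (ws r) s) \<le> real M * \<eta> s"
    proof -
      have "(\<Sum>r<R. real (m r) * cnt (ws r) s) \<le> (\<Sum>r<R. lam r * real M * cnt (ws r) s)"
        using m1 cnt_nonneg by (intro sum_mono mult_right_mono) auto
      also have "\<dots> = real M * \<eta> s" using D2 s by (simp add: sum_distrib_left algebra_simps)
      finally show ?thesis .
    qed
    have lo: "(\<Sum>r<R. real (m r) * cnt (ws r) s) \<ge> real M * \<eta> s - C"
    proof -
      have "(\<Sum>r<R. (lam r * real M - 1) * cnt (ws r) s) \<le> (\<Sum>r<R. real (m r) * cnt (ws r) s)"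
        using m2 cnt_nonneg by (intro sum_mono mult_right_mono) (auto simp: less_imp_le)
      moreover have "(\<Sum>r<R. (lam r * real M - 1) * cnt (ws r) s) =
          real M * \<eta> s - (\<Sum>r<R. cnt (ws r) s)"
        using D2 s by (simp add: sum_distrib_left algebra_simps sum_subtractf)
      moreover have "(\<Sum>r<R. cnt (ws r) s) \<le> C" unfolding C_def by (intro sum_mono cnt_le)
      ultimately show ?thesis by linarith
    qed
    have "\<bar>cnt W s - (\<Sum>r<R. real (m r) * cnt (ws r) s)\<bar> \<le> K"
      using WB(2)[of s] ls unfolding K_def by simp
    thus ?thesis using up lo by linarith
  qed
  show ?thesis
  proof (intro exI conjI ballI)
    show "W \<noteq> []" using LWpos by auto
    show "set W \<subseteq> {..<b}" unfolding W_def using D1 set_rep by fastforce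
    fix s assume s: "s \<in> strings b k"
    have e0: "0 \<le> \<eta> s" "\<eta> s \<le> 1" using nn s eta1 by auto
    have "\<bar>cnt W s - \<eta> s * real (length W)\<bar> \<le> \<bar>cnt W s - real M * \<eta> s\<bar> + \<eta> s * \<bar>real M - real (length W)\<bar>"
    proof -
      define A where "A = cnt W s - real M * \<eta> s"
      define B where "B = \<eta> s * (real M - real (length W))"
      have "cnt W s - \<eta> s * real (length W) = A + B"
        unfolding A_def B_def by (simp add: algebra_simps)
      hence "\<bar>cnt W s - \<eta> s * real (length W)\<bar> \<le> \<bar>A\<bar> + \<bar>B\<bar>" using abs_triangle_ineq[of A B] by simp
      moreover have "\<bar>B\<bar> = \<eta> s * \<bar>real M - real (length W)\<bar>" unfolding B_def using e0 by (simp add: abs_mult)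
      ultimately show ?thesis unfolding A_def by simp
    qed
    also have "\<dots> \<le> (C + K) + 1 * C"
    proof (rule add_mono)
      show "\<bar>cnt W s - real M * \<eta> s\<bar> \<le> C + K" by (rule cntW[OF s])
      have "\<bar>real M - real (length W)\<bar> \<le> C" using LW1 LW2 by linarith
      thus "\<eta> s * \<bar>real M - real (length W)\<bar> \<le> 1 * C" using e0 C0 by (intro mult_mono) auto
    qed
    finally have num: "\<bar>cnt W s - \<eta> s * real (length W)\<bar> \<le> 2 * C + K" by simp
    have "\<bar>cnt W s / real (length W) - \<eta> s\<bar> = \<bar>cnt W s - \<eta> s * real (length W)\<bar> / real (length W)"
      using LWpos by (simp add: field_simps)
    also have "\<dots> \<le> (2 * C + K) / real (length W)"
      using num LWpos by (simp add: divide_right_mono)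
    also have "\<dots> \<le> (2 * C + K) / (real M - C)"
      using LW2 MC C0 K0 LWpos by (intro divide_left_mono) (auto intro!: mult_pos_pos)
    also have "\<dots> < \<epsilon>"
    proof -
      have "(2 * C + K) / \<epsilon> < real M - C" using M by linarith
      hence "2 * C + K < \<epsilon> * (real M - C)" using eps by (simp add: field_simps)
      thus ?thesis using MC by (simp add: field_simps)
    qed
    finally show "\<bar>cnt W s / real (length W) - \<eta> s\<bar> < \<epsilon>" .
  qed
qed

lemma reg_both:
  assumes "regular_matrix a" "g \<longlonglongrightarrow> l"
  shows "summable (\<lambda>i. a n i * g i) \<and> (\<lambda>n. \<Sum>i. a n i * g i) \<longlonglongrightarrow> l"
proof -
  note H = assms(1)[unfolded regular_matrix_def, rule_format, of 1 "\<lambda>i j. g i" "\<lambda>j. l"]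
  have "\<And>j. j < (1::nat) \<Longrightarrow> g \<longlonglongrightarrow> l" using assms(2) by simp
  note H2 = H[OF this]
  have "summable (\<lambda>i. a n i * g i)" using H2 by simp
  moreover have "(\<lambda>n. \<Sum>i. a n i * g i) \<longlonglongrightarrow> l" using H2 by simp
  ultimately show ?thesis ..
qed

lemma reg_summable:
  assumes "regular_matrix a" "g \<longlonglongrightarrow> l"
  shows "summable (\<lambda>i. a n i * g i)"
  using reg_both[OF assms] by blast

lemma reg_lim:
  assumes "regular_matrix a" "g \<longlonglongrightarrow> l"
  shows "(\<lambda>n. \<Sum>i. a n i * g i) \<longlonglongrightarrow> l"
  using reg_both[OF assms] by blast

lemma sum_split_ivl: "(m::nat) \<le> n \<Longrightarrow> (\<Sum>i<n. f i) = (\<Sum>i<m. f i) + (\<Sum>i\<in>{m..<n}. (f i :: real))"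
  using sum.atLeastLessThan_concat[of 0 m n f] by (simp add: atLeast0LessThan)

lemma abs_summable_of_conv:
  fixes c :: "nat \<Rightarrow> real"
  assumes conv: "\<And>g. g \<longlonglongrightarrow> 0 \<Longrightarrow> summable (\<lambda>i. c i * g i)"
  shows "summable (\<lambda>i. \<bar>c i\<bar>)"
proof (rule ccontr)
  assume ns: "\<not> summable (\<lambda>i. \<bar>c i\<bar>)"
  define T where "T n = (\<Sum>j<n. \<bar>c j\<bar>)" for n
  have Tmono: "T n \<le> T m" if "n \<le> m" for n m
    unfolding T_def using that by (intro sum_mono2) auto
  have T0: "T n \<ge> 0" for n unfolding T_def by (auto intro: sum_nonneg)
  have unb: "\<exists>n. T n > B" for B
  proof (rule ccontr)
    assume "\<not> ?thesis"
    hence "\<not> T (Suc n) > B" for n by blast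
    hence le: "T (Suc n) \<le> B" for n by (meson not_less)
    have "(\<Sum>j\<le>n. \<bar>c j\<bar>) \<le> B" for n
      using le[of n] unfolding T_def by (simp only: lessThan_Suc_atMost)
    hence "\<And>n. (\<Sum>j\<le>n. \<bar>c j\<bar>) \<le> B" by blast
    hence "summable (\<lambda>i. \<bar>c i\<bar>)" by (intro bounded_imp_summable) auto
    thus False using ns by simp
  qed
  define g where "g i = sgn (c i) / max 1 (T (Suc i))" for i
  have g0: "g \<longlonglongrightarrow> 0"
  proof (rule LIMSEQ_I)
    fix r :: real assume r: "r > 0"
    obtain n0 where n0: "T n0 > 1 / r" using unb by blast
    show "\<exists>no. \<forall>n\<ge>no. norm (g n - 0) < r"
    proof (intro exI allI impI)
      fix n assume "n \<ge> n0"
      hence Tn: "T (Suc n) > 1 / r" using Tmono[of n0 "Suc n"] n0 by auto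
      have "1 / r > 0" using r by simp
      hence Tp: "T (Suc n) > 0" using Tn by linarith
      have pos: "max 1 (T (Suc n)) > 0" by simp
      have "norm (g n - 0) = \<bar>sgn (c n)\<bar> / max 1 (T (Suc n))"
        unfolding g_def using pos by (simp add: abs_divide)
      also have "\<dots> \<le> 1 / max 1 (T (Suc n))"
        using pos by (intro divide_right_mono) (auto simp: abs_sgn_eq)
      also have "\<dots> \<le> 1 / T (Suc n)"
      proof -
        have "0 < max 1 (T (Suc n)) * T (Suc n)" using Tp by (intro mult_pos_pos) auto
        thus ?thesis by (intro divide_left_mono) auto
      qed
      also have "\<dots> < r" using Tn r Tp by (simp add: divide_less_eq field_simps)
      finally show "norm (g n - 0) < r" .
    qed
  qed
  have h: "c i * g i = \<bar>c i\<bar> / max 1 (T (Suc i))" for i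
    unfolding g_def by (cases "c i > 0"; cases "c i < 0") (auto simp: sgn_real_def)
  have sh: "summable (\<lambda>i. \<bar>c i\<bar> / max 1 (T (Suc i)))" using conv[OF g0] h by simp
  then obtain N where N: "\<forall>m\<ge>N. \<forall>n. norm (\<Sum>i\<in>{m..<n}. \<bar>c i\<bar> / max 1 (T (Suc i))) < 1 / 2"
    unfolding summable_Cauchy by (meson half_gt_zero zero_less_one)
  obtain n where n: "T n > 2 * T N + 1" using unb by blast
  have Nn: "N \<le> n"
  proof (rule ccontr)
    assume "\<not> N \<le> n"
    hence "T n \<le> T N" using Tmono by auto
    thus False using n T0[of N] by linarith
  qed
  have "(\<Sum>i\<in>{N..<n}. \<bar>c i\<bar> / T n) \<le> (\<Sum>i\<in>{N..<n}. \<bar>c i\<bar> / max 1 (T (Suc i)))"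
  proof (intro sum_mono)
    fix i assume "i \<in> {N..<n}"
    hence "T (Suc i) \<le> T n" using Tmono by auto
    moreover have "1 \<le> T n" using n T0[of N] by linarith
    ultimately have "max 1 (T (Suc i)) \<le> T n" by simp
    thus "\<bar>c i\<bar> / T n \<le> \<bar>c i\<bar> / max 1 (T (Suc i))"
      by (intro divide_left_mono) auto
  qed
  moreover have "(\<Sum>i\<in>{N..<n}. \<bar>c i\<bar> / T n) = (T n - T N) / T n"
    using sum_split_ivl[OF Nn, of "\<lambda>i. \<bar>c i\<bar>"] unfolding T_def by (simp add: sum_divide_distrib)
  moreover have "(T n - T N) / T n \<ge> 1 / 2"
  proof -
    have "T n > 0" using n T0[of N] by linarith
    thus ?thesis using n by (simp add: field_simps)
  qed
  moreover have "(\<Sum>i\<in>{N..<n}. \<bar>c i\<bar> / max 1 (T (Suc i))) < 1 / 2"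
  proof -
    have S0: "(\<Sum>i\<in>{N..<n}. \<bar>c i\<bar> / max 1 (T (Suc i))) \<ge> 0" by (auto intro: sum_nonneg)
    have "norm (\<Sum>i\<in>{N..<n}. \<bar>c i\<bar> / max 1 (T (Suc i))) < 1 / 2" using N by auto
    thus ?thesis using S0 by simp
  qed
  ultimately show False by linarith
qed

lemma regular_row_abs:
  assumes "regular_matrix a"
  shows "summable (\<lambda>i. \<bar>a n i\<bar>)"
  by (rule abs_summable_of_conv) (rule reg_summable[OF assms])

definition fr :: "(nat \<Rightarrow> nat) \<Rightarrow> nat list \<Rightarrow> nat \<Rightarrow> real" where
  "fr e s n = real (card {i \<in> {1..n}. \<forall>j < length s. e (i + j) = s ! j}) / real n"

lemma freq_fr: "freq b s n x = fr (digit b x) s n"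
  unfolding freq_def fr_def ..

lemma fr_bounds: "0 \<le> fr e s n" "fr e s n \<le> 1"
proof -
  show "0 \<le> fr e s n" unfolding fr_def by auto
  have "card {i \<in> {1..n}. \<forall>j < length s. e (i + j) = s ! j} \<le> card {1..n}"
    by (intro card_mono) auto
  hence "real (card {i \<in> {1..n}. \<forall>j < length s. e (i + j) = s ! j}) \<le> real n" by simp
  thus "fr e s n \<le> 1" unfolding fr_def by (cases "n = 0") (auto simp: divide_le_eq)
qed

lemma fr_periodic_limit:
  fixes e :: "nat \<Rightarrow> nat"
  assumes w: "w \<noteq> []" and e: "\<And>i. e (Suc (P0 + i)) = w ! (i mod length w)"
  shows "(\<lambda>n. fr e s n) \<longlonglongrightarrow> cnt w s / real (length w)"
proof -
  define L where "L = length w"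
  have L: "L > 0" using w unfolding L_def by auto
  define c where "c = cnt w s"
  have c0: "c \<ge> 0" unfolding c_def by (rule cnt_nonneg)
  define f where "f i = (if (\<forall>j<length s. e (i + j) = s ! j) then 1 else (0::real))" for i
  define F where "F t = (if win w (length s) t = s then 1 else (0::real))" for t
  have cntn: "real (card {i \<in> {1..n}. \<forall>j < length s. e (i + j) = s ! j}) = (\<Sum>i<n. f (Suc i))" for n
  proof -
    have "real (card {i \<in> {1..n}. \<forall>j < length s. e (i + j) = s ! j}) =
        (\<Sum>i\<in>{i \<in> {1..n}. \<forall>j < length s. e (i + j) = s ! j}. 1)" by simp
    also have "\<dots> = (\<Sum>i\<in>{1..n}. f i)" unfolding f_def by (subst sum.inter_filter) auto
    also have "\<dots> = (\<Sum>i<n. f (Suc i))" by (simp add: sum.atLeast1_atMost_eq)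
    finally show ?thesis .
  qed
  have fF: "f (Suc (P0 + t)) = F (t mod L)" for t
  proof -
    have "(\<forall>j<length s. e (Suc (P0 + t) + j) = s ! j) \<longleftrightarrow> win w (length s) t = s"
    proof -
      have "e (Suc (P0 + t) + j) = win w (length s) t ! j" if "j < length s" for j
        using that e[of "t + j"] by (simp add: win_nth add.assoc)
      thus ?thesis by (auto simp: list_eq_iff_nth_eq)
    qed
    thus ?thesis unfolding f_def F_def using win_mod[of w "length s" t] unfolding L_def by simp
  qed
  have F0: "F t \<ge> 0" for t unfolding F_def by simp
  have sumF: "(\<Sum>t<L. F t) = c" unfolding F_def c_def cnt_def L_def ..
  define B where "B = real P0 + c + real P0 * c / real L"
  have bound: "\<bar>(\<Sum>i<n. f (Suc i)) - real n * c / real L\<bar> \<le> B" if n: "n \<ge> P0" for n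
  proof -
    define r where "r = n - P0"
    have nr: "n = P0 + r" unfolding r_def using n by simp
    have split: "(\<Sum>i<n. f (Suc i)) = (\<Sum>i<P0. f (Suc i)) + (\<Sum>t<r. F (t mod L))"
      unfolding nr sum_lessThan_add using fF by simp
    have A0: "0 \<le> (\<Sum>i<P0. f (Suc i))" unfolding f_def by (auto intro: sum_nonneg)
    have A1: "(\<Sum>i<P0. f (Suc i)) \<le> real P0"
    proof -
      have "(\<Sum>i<P0. f (Suc i)) \<le> (\<Sum>i<P0. 1)" unfolding f_def by (intro sum_mono) auto
      thus ?thesis by simp
    qed
    have P1: "real (r div L) * c \<le> (\<Sum>t<r. F (t mod L))"
      and P2: "(\<Sum>t<r. F (t mod L)) \<le> real (r div L) * c + c"
      using sum_periodic_bounds[where F = F and m = r, OF L F0] unfolding sumF by auto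
    have "r = r div L * L + r mod L" by simp
    hence req: "real r = real (r div L) * real L + real (r mod L)" by (metis of_nat_add of_nat_mult)
    have "r mod L < L" using L by simp
    hence rmod: "real (r mod L) < real L" by simp
    have q1: "real (r div L) \<le> real r / real L" using req L by (simp add: field_simps)
    have q2: "real r / real L < real (r div L) + 1" using req rmod L by (simp add: field_simps)
    have cq1: "real (r div L) * c \<le> real r / real L * c" using q1 c0 by (intro mult_right_mono)
    have cq2: "(real r / real L - 1) * c \<le> real (r div L) * c" using q2 c0 by (intro mult_right_mono) auto
    have neq: "real n * c / real L = real P0 * c / real L + real r / real L * c"
      unfolding nr by (simp add: field_simps add_divide_distrib)
    have p0c: "real P0 * c / real L \<ge> 0" using c0 by simp
    note neq
    moreover note p0c
    moreover have "real r / real L * c \<ge> 0" using c0 by simp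
    moreover have "(real r / real L - 1) * c = real r / real L * c - c" by (simp add: algebra_simps)
    ultimately have lo: "real n * c / real L - B \<le> (\<Sum>i<P0. f (Suc i)) + (\<Sum>t<r. F (t mod L))"
      unfolding B_def using A0 A1 P1 P2 cq1 cq2 c0 by linarith
    have "(\<Sum>i<P0. f (Suc i)) + (\<Sum>t<r. F (t mod L)) \<le> real P0 + (real (r div L) * c + c)"
      using A1 P2 by linarith
    also have "\<dots> \<le> real P0 + (real r / real L * c + c)" using cq1 by linarith
    also have "\<dots> \<le> real n * c / real L + B"
    proof -
      have gen: "\<And>X Z Q::real. X = Z + Q \<Longrightarrow> Z \<ge> 0 \<Longrightarrow> real P0 + (Q + c) \<le> X + (real P0 + c + Z)"
        by linarith
      show ?thesis unfolding B_def by (rule gen[OF neq p0c])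
    qed
    finally have hi: "(\<Sum>i<P0. f (Suc i)) + (\<Sum>t<r. F (t mod L)) \<le> real n * c / real L + B" .
    show ?thesis unfolding split using lo hi by (simp only: abs_le_iff) linarith
  qed
  have lim0: "(\<lambda>n. B / real n) \<longlonglongrightarrow> 0" by (rule lim_const_over_n)
  have "(\<lambda>n. fr e s n - c / real L) \<longlonglongrightarrow> 0"
  proof (rule Lim_null_comparison[OF _ lim0])
    show "\<forall>\<^sub>F n in sequentially. norm (fr e s n - c / real L) \<le> B / real n"
      unfolding eventually_sequentially
    proof (intro exI[of _ "Suc P0"] allI impI)
      fix n assume n: "Suc P0 \<le> n"
      hence npos: "real n > 0" by simp
      have "fr e s n - c / real L = ((\<Sum>i<n. f (Suc i)) - real n * c / real L) / real n"
        unfolding fr_def cntn using npos by (simp add: field_simps)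
      hence "norm (fr e s n - c / real L) = \<bar>(\<Sum>i<n. f (Suc i)) - real n * c / real L\<bar> / real n"
        by simp
      also have "\<dots> \<le> B / real n" using bound[of n] n npos by (intro divide_right_mono) auto
      finally show "norm (fr e s n - c / real L) \<le> B / real n" .
    qed
  qed
  thus ?thesis unfolding c_def L_def by (simp add: LIM_zero_iff)
qed

lemma finite_eps:
  fixes Q :: "'a \<Rightarrow> real \<Rightarrow> bool"
  assumes fin: "finite A" and ex: "\<forall>s\<in>A. \<exists>e>0. Q s e"
    and mono: "\<And>s e e'. Q s e \<Longrightarrow> 0 < e' \<Longrightarrow> e' \<le> e \<Longrightarrow> Q s e'"
  shows "\<exists>e>0. \<forall>s\<in>A. Q s e"
  using fin ex
proof (induction A rule: finite_induct)
  case empty show ?case by (intro exI[of _ 1]) auto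
next
  case (insert x A)
  obtain e1 where e1: "e1 > 0" "\<forall>s\<in>A. Q s e1" using insert by auto
  obtain e2 where e2: "e2 > 0" "Q x e2" using insert.prems by auto
  show ?case
  proof (intro exI[of _ "min e1 e2"] conjI ballI)
    show "min e1 e2 > 0" using e1 e2 by simp
    fix s assume "s \<in> insert x A"
    thus "Q s (min e1 e2)" using e1 e2 mono[of _ _ "min e1 e2"] by auto
  qed
qed

lemma box_in_open:
  assumes U: "openin (Rstrings b k) U" and eta: "\<eta> \<in> U"
  shows "\<exists>\<epsilon>>0. \<forall>p\<in>extensional (strings b k). (\<forall>s\<in>strings b k. \<bar>p s - \<eta> s\<bar> < \<epsilon>) \<longrightarrow> p \<in> U"
proof -
  have H: "\<forall>x\<in>U. \<exists>V. finite {i \<in> strings b k. V i \<noteq> topspace euclideanreal} \<and>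
      (\<forall>i\<in>strings b k. openin euclideanreal (V i)) \<and> x \<in> PiE (strings b k) V \<and> PiE (strings b k) V \<subseteq> U"
    using U unfolding Rstrings_def openin_product_topology_alt .
  obtain V where V: "\<forall>s\<in>strings b k. openin euclideanreal (V s)" "\<eta> \<in> PiE (strings b k) V"
    "PiE (strings b k) V \<subseteq> U"
    using bspec[OF H eta] by blast
  have "\<forall>s\<in>strings b k. \<exists>e>0. ball (\<eta> s) e \<subseteq> V s"
  proof
    fix s assume s: "s \<in> strings b k"
    have "open (V s)" using V(1) s open_openin by blast
    moreover have "\<eta> s \<in> V s" using V(2) s by (auto simp: PiE_iff)
    ultimately show "\<exists>e>0. ball (\<eta> s) e \<subseteq> V s" by (simp add: open_contains_ball)
  qed
  moreover have "\<And>s e e'. ball (\<eta> s) e \<subseteq> V s \<Longrightarrow> 0 < e' \<Longrightarrow> e' \<le> e \<Longrightarrow> ball (\<eta> s) e' \<subseteq> V s"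
    by (meson subset_ball order_trans)
  ultimately obtain \<epsilon> where eps: "\<epsilon> > 0" "\<forall>s\<in>strings b k. ball (\<eta> s) \<epsilon> \<subseteq> V s"
    using finite_eps[OF finite_strings, where Q = "\<lambda>s e. ball (\<eta> s) e \<subseteq> V s"] by blast
  show ?thesis
  proof (intro exI[of _ \<epsilon>] conjI ballI impI)
    show "\<epsilon> > 0" by (rule eps(1))
    fix p assume p: "p \<in> extensional (strings b k)" and c: "\<forall>s\<in>strings b k. \<bar>p s - \<eta> s\<bar> < \<epsilon>"
    have "p s \<in> V s" if "s \<in> strings b k" for s
    proof -
      have "p s \<in> ball (\<eta> s) \<epsilon>" using c that by (simp add: dist_real_def abs_minus_commute)
      thus ?thesis using eps(2) that by blast
    qed
    hence "p \<in> PiE (strings b k) V" using p by (simp add: PiE_iff)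
    thus "p \<in> U" using V(3) by auto
  qed
qed

lemma nd_from_dense:
  assumes sub: "N \<subseteq> topspace X"
    and dense: "\<And>V. openin X V \<Longrightarrow> V \<noteq> {} \<Longrightarrow> \<exists>W. openin X W \<and> W \<noteq> {} \<and> W \<subseteq> V \<and> W \<inter> N = {}"
  shows "nowhere_dense_in X N"
proof -
  have "X interior_of (X closure_of N) = {}"
  proof (rule ccontr)
    assume ne: "X interior_of (X closure_of N) \<noteq> {}"
    have "\<exists>W. openin X W \<and> W \<noteq> {} \<and> W \<subseteq> X interior_of (X closure_of N) \<and> W \<inter> N = {}"
      by (rule dense[OF openin_interior_of ne])
    then obtain W where W: "openin X W" "W \<noteq> {}" "W \<subseteq> X interior_of (X closure_of N)" "W \<inter> N = {}"
      by (elim exE conjE)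
    obtain z where z: "z \<in> W" using W(2) by (meson ex_in_conv)
    have "X interior_of (X closure_of N) \<subseteq> X closure_of N" by (rule interior_of_subset)
    hence "z \<in> X closure_of N" using W(3) z by (meson subsetD)
    hence "\<forall>T. z \<in> T \<and> openin X T \<longrightarrow> (\<exists>y. y \<in> N \<and> y \<in> T)" unfolding in_closure_of by (rule conjunct2)
    hence "\<exists>y. y \<in> N \<and> y \<in> W" using W(1) z by (meson)
    then obtain y where "y \<in> N" "y \<in> W" by (elim exE conjE)
    thus False using W(4) by (meson disjoint_iff)
  qed
  thus ?thesis unfolding nowhere_dense_in_def using sub by auto
qed

lemma digit_lt:
  assumes b: "b \<ge> (2::nat)" and x: "0 < x" "x \<le> 1"
  shows "digit b x m < b"
  using digit_expansion[OF b x] unfolding nonterm_expansion_def by auto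

lemma dense_step:
  fixes a :: "nat \<Rightarrow> nat \<Rightarrow> real" and Nf :: "nat \<Rightarrow> nat"
  assumes reg: "regular_matrix a" and smN: "strict_mono Nf"
    and b: "b \<ge> 2" and k: "k \<ge> 1" and w: "w \<noteq> []" "set w \<subseteq> {..<b}" and eps: "\<epsilon> > 0"
    and V: "openin (subtopology euclideanreal {0<..1}) V" "V \<noteq> {}"
  shows "\<exists>W. openin (subtopology euclideanreal {0<..1}) W \<and> W \<noteq> {} \<and> W \<subseteq> V \<and>
     (\<forall>x\<in>W. \<exists>j\<ge>j0. \<forall>n\<in>{Nf j..<Nf (Suc j)}. \<forall>s\<in>strings b k.
        \<bar>Api a b k x n s - cnt w s / real (length w)\<bar> < \<epsilon>)"
proof -
  obtain T where T0: "openin euclideanreal T" "V = T \<inter> {0<..1}"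
    using V(1) unfolding openin_subtopology by blast
  have T: "open T" "V = T \<inter> {0<..1}" using T0 open_openin by blast+
  obtain x0 where x0: "x0 \<in> V" using V(2) by auto
  have x0T: "x0 \<in> T" and x01: "0 < x0" "x0 \<le> 1" using x0 T by auto
  obtain r where r: "r > 0" "ball x0 r \<subseteq> T" using T(1) x0T open_contains_ball by blast
  have bpos: "real b > 1" using b by auto
  obtain P0 where P0: "(1 / real b) ^ P0 < r" using real_arch_pow_inv[OF r(1), of "1 / real b"] bpos by auto
  hence P0': "1 / real b ^ P0 < r" by (simp add: power_one_over)
  define L where "L = length w"
  have L: "L > 0" using w unfolding L_def by auto
  define e where "e m = (if m \<le> P0 then digit b x0 m else w ! ((m - Suc P0) mod L))" for m
  have eper: "e (Suc (P0 + i)) = w ! (i mod length w)" for i unfolding e_def L_def by simp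
  have lim: "(\<lambda>n. \<Sum>i. a n i * fr e s (Suc i)) \<longlonglongrightarrow> cnt w s / real L" for s
    using reg_lim[OF reg LIMSEQ_Suc[OF fr_periodic_limit[OF w(1) eper]]] unfolding L_def .
  have "\<forall>\<^sub>F n in sequentially. \<forall>s\<in>strings b k.
      dist (\<Sum>i. a n i * fr e s (Suc i)) (cnt w s / real L) < \<epsilon> / 2"
    using eps by (intro eventually_ball_finite finite_strings ballI tendstoD[OF lim]) auto
  then obtain N where N: "\<And>n s. n \<ge> N \<Longrightarrow> s \<in> strings b k \<Longrightarrow>
      \<bar>(\<Sum>i. a n i * fr e s (Suc i)) - cnt w s / real L\<bar> < \<epsilon> / 2"
    unfolding eventually_sequentially dist_real_def by blast
  define j where "j = max j0 N"
  have jj0: "j \<ge> j0" unfolding j_def by simp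
  have NfN: "Nf j \<ge> N" using seq_suble[OF smN, of j] unfolding j_def by simp
  define A where "A = {Nf j..<Nf (Suc j)}"
  have "\<forall>\<^sub>F M in sequentially. \<forall>n\<in>A. norm (\<Sum>i. \<bar>a n (i + M)\<bar>) < \<epsilon> / 2"
  proof (intro eventually_ball_finite ballI)
    show "finite A" unfolding A_def by simp
    fix n assume "n \<in> A"
    obtain M' where "\<forall>M\<ge>M'. norm (\<Sum>i. \<bar>a n (i + M)\<bar>) < \<epsilon> / 2"
      using suminf_exist_split[of "\<epsilon> / 2" "\<lambda>i. \<bar>a n i\<bar>"] eps regular_row_abs[OF reg] by auto
    thus "\<forall>\<^sub>F M in sequentially. norm (\<Sum>i. \<bar>a n (i + M)\<bar>) < \<epsilon> / 2"
      unfolding eventually_sequentially by blast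
  qed
  then obtain M0 where M0: "\<And>n. n \<in> A \<Longrightarrow> \<bar>\<Sum>i. \<bar>a n (i + M0)\<bar>\<bar> < \<epsilon> / 2"
    unfolding eventually_sequentially by force
  define P where "P = P0 + M0 + k"
  have edig: "\<forall>i<P. e (Suc i) < b"
  proof (intro allI impI)
    fix i assume "i < P"
    show "e (Suc i) < b"
    proof (cases "Suc i \<le> P0")
      case True thus ?thesis unfolding e_def using digit_lt[OF b x01] by simp
    next
      case False
      have "(Suc i - Suc P0) mod L < L" using L by simp
      hence "w ! ((Suc i - Suc P0) mod L) \<in> set w" unfolding L_def by simp
      thus ?thesis unfolding e_def using False w(2) by auto
    qed
  qed
  define v where "v = (\<Sum>i<P. real (e (Suc i)) / real b ^ Suc i)"
  have v0: "0 \<le> v" unfolding v_def by (auto intro!: sum_nonneg)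
  have v1: "v + 1 / real b ^ P \<le> 1" using partial_le[OF b edig] unfolding v_def by simp
  have bP: "1 / real b ^ P > 0" using bpos by simp
  define W where "W = {v<..<v + 1 / real b ^ P}"
  have W01: "W \<subseteq> {0<..1}" unfolding W_def using v0 v1 by auto
  have digx: "\<forall>i<P. digit b x (Suc i) = e (Suc i)" if "x \<in> W" for x
    using cylinder_digits[OF b edig _, of v x] that unfolding W_def v_def by auto
  show ?thesis
  proof (intro exI[of _ W] conjI ballI)
    show "openin (subtopology euclideanreal {0<..1}) W"
    proof -
      have "open W" unfolding W_def by simp
      hence "openin euclideanreal W" using open_openin by blast
      moreover have "W = W \<inter> {0<..1}" using W01 by blast
      ultimately show ?thesis unfolding openin_subtopology by blast
    qed
    show "W \<noteq> {}"
    proof -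
      have "1 / real b ^ P / 2 < 1 / real b ^ P" "0 < 1 / real b ^ P / 2" using bP by (simp_all add: field_simps)
      hence "v + 1 / real b ^ P / 2 \<in> W" unfolding W_def by auto
      thus ?thesis by auto
    qed
    show "W \<subseteq> V"
    proof
      fix x assume xW: "x \<in> W"
      have x01': "0 < x" "x \<le> 1" using xW W01 by auto
      have "\<forall>i<P0. digit b x (Suc i) = digit b x0 (Suc i)"
        using digx[OF xW] unfolding P_def e_def by auto
      hence "\<bar>x - x0\<bar> < 1 / real b ^ P0" using prefix_close[OF b x01' x01] by (simp add: abs_minus_commute)
      hence "x \<in> ball x0 r" using P0' by (simp add: dist_real_def abs_minus_commute)
      thus "x \<in> V" using r(2) T(2) x01' by auto
    qed
    fix x assume xW: "x \<in> W"
    have x01': "0 < x" "x \<le> 1" using xW W01 by auto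
    have dx: "\<forall>i<P. digit b x (Suc i) = e (Suc i)" by (rule digx[OF xW])
    show "\<exists>j\<ge>j0. \<forall>n\<in>{Nf j..<Nf (Suc j)}. \<forall>s\<in>strings b k.
        \<bar>Api a b k x n s - cnt w s / real (length w)\<bar> < \<epsilon>"
    proof (intro exI[of _ j] conjI ballI)
      show "j \<ge> j0" by (rule jj0)
      fix n s assume nA: "n \<in> {Nf j..<Nf (Suc j)}" and s: "s \<in> strings b k"
      have ls: "length s = k" using s unfolding strings_def by auto
      define fx where "fx i = fr (digit b x) s (Suc i)" for i
      define fe where "fe i = fr e s (Suc i)" for i
      have Api: "Api a b k x n s = (\<Sum>i. a n i * fx i)"
        unfolding Api_def fx_def using s by (simp add: freq_fr)
      have eqi: "fx i = fe i" if "i < M0" for i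
      proof -
        have "{i' \<in> {1..Suc i}. \<forall>j<length s. digit b x (i' + j) = s ! j} =
              {i' \<in> {1..Suc i}. \<forall>j<length s. e (i' + j) = s ! j}"
        proof (intro Collect_cong conj_cong refl all_cong imp_cong)
          fix i' j' assume i': "i' \<in> {1..Suc i}" and j': "j' < length s"
          have "i' + j' = Suc (i' + j' - 1)" using i' by auto
          moreover have "i' + j' - 1 < P" using i' j' ls that unfolding P_def by auto
          ultimately have "digit b x (i' + j') = e (i' + j')" using dx by metis
          thus "(digit b x (i' + j') = s ! j') = (e (i' + j') = s ! j')" by simp
        qed
        thus ?thesis unfolding fx_def fe_def fr_def by simp
      qed
      have sa: "summable (\<lambda>i. \<bar>a n i\<bar>)" by (rule regular_row_abs[OF reg])
      have bnd: "\<bar>fx i - fe i\<bar> \<le> 1" for i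
        using fr_bounds[of "digit b x" s "Suc i"] fr_bounds[of e s "Suc i"] unfolding fx_def fe_def by auto
      have sfx: "summable (\<lambda>i. a n i * fx i)"
        by (rule summable_comparison_test[OF _ sa])
           (use fr_bounds in \<open>auto simp: fx_def abs_mult intro!: mult_left_le\<close>)
      have sfe: "summable (\<lambda>i. a n i * fe i)"
        by (rule summable_comparison_test[OF _ sa])
           (use fr_bounds in \<open>auto simp: fe_def abs_mult intro!: mult_left_le\<close>)
      define h where "h i = a n i * (fx i - fe i)" for i
      have sh: "summable h" unfolding h_def using summable_diff[OF sfx sfe] by (simp add: algebra_simps)
      have diff: "(\<Sum>i. a n i * fx i) - (\<Sum>i. a n i * fe i) = (\<Sum>i. h i)"
        unfolding h_def using suminf_diff[OF sfx sfe] by (simp add: algebra_simps)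
      have h0: "h i = 0" if "i < M0" for i unfolding h_def using eqi[OF that] by simp
      have "(\<Sum>i. h i) = (\<Sum>i. h (i + M0)) + sum h {..<M0}" by (rule suminf_split_initial_segment[OF sh])
      also have "sum h {..<M0} = 0" using h0 by simp
      finally have hs: "(\<Sum>i. h i) = (\<Sum>i. h (i + M0))" by simp
      have sa': "summable (\<lambda>i. \<bar>a n (i + M0)\<bar>)" using summable_ignore_initial_segment[OF sa] .
      have hle: "\<bar>h (i + M0)\<bar> \<le> \<bar>a n (i + M0)\<bar>" for i
        unfolding h_def abs_mult using bnd[of "i + M0"] by (intro mult_left_le) auto
      have sah: "summable (\<lambda>i. \<bar>h (i + M0)\<bar>)"
        by (rule summable_comparison_test[OF _ sa']) (use hle in auto)
      have "\<bar>\<Sum>i. h (i + M0)\<bar> \<le> (\<Sum>i. \<bar>h (i + M0)\<bar>)" by (rule summable_rabs[OF sah])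
      also have "\<dots> \<le> (\<Sum>i. \<bar>a n (i + M0)\<bar>)" by (rule suminf_le[OF hle sah sa'])
      also have "\<dots> \<le> \<bar>\<Sum>i. \<bar>a n (i + M0)\<bar>\<bar>" by simp
      also have "\<dots> < \<epsilon> / 2" using M0[of n] nA unfolding A_def by simp
      finally have t1: "\<bar>(\<Sum>i. a n i * fx i) - (\<Sum>i. a n i * fe i)\<bar> < \<epsilon> / 2" using diff hs by simp
      have "n \<ge> N" using nA NfN by auto
      hence t2: "\<bar>(\<Sum>i. a n i * fe i) - cnt w s / real L\<bar> < \<epsilon> / 2" using N[of n s] s unfolding fe_def by simp
      show "\<bar>Api a b k x n s - cnt w s / real (length w)\<bar> < \<epsilon>"
        unfolding Api using t1 t2 unfolding L_def by linarith
    qed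
  qed
qed


theorem theorem4p2:
  fixes I :: "nat set set" and a :: "nat \<Rightarrow> nat \<Rightarrow> real"
  assumes "meager_ideal I" and "regular_matrix a"
  shows "comeager_in (subtopology euclideanreal {0<..1})
           {x \<in> {0<..1}. \<forall>b k. b \<ge> 2 \<and> k \<ge> 1 \<longrightarrow> Delta b k \<subseteq> Gamma_clust b k x I a}"
proof -
  obtain Nf where smN: "strict_mono Nf"
    and NfI: "\<forall>S. (\<forall>j0. \<exists>j\<ge>j0. {Nf j..<Nf (Suc j)} \<subseteq> S) \<longrightarrow> S \<notin> I"
    using ideal_intervals[OF assms(1)] by blast
  define X where "X = subtopology euclideanreal {0<..1::real}"
  have topX: "topspace X = {0<..1}" unfolding X_def by simp
  define valid where "valid b k w \<longleftrightarrow> b \<ge> 2 \<and> k \<ge> 1 \<and> w \<noteq> [] \<and> set w \<subseteq> {..<b}"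
    for b k :: nat and w :: "nat list"
  define Ob where "Ob b k w m j0 = {x\<in>{0<..1::real}. valid b k w \<longrightarrow>
      (\<exists>j\<ge>j0. \<forall>n\<in>{Nf j..<Nf (Suc j)}. \<forall>s\<in>strings b k.
         \<bar>Api a b k x n s - cnt w s / real (length w)\<bar> < 1 / real (Suc m))}"
    for b k :: nat and w :: "nat list" and m j0 :: nat
  define Good where "Good = {x \<in> {0<..1::real}. \<forall>b k. b \<ge> 2 \<and> k \<ge> 1 \<longrightarrow> Delta b k \<subseteq> Gamma_clust b k x I a}"
  define Fam where "Fam = (\<lambda>(b,k,w,m,j0). {0<..1} - Ob b k w m j0) ` (UNIV :: (nat \<times> nat \<times> nat list \<times> nat \<times> nat) set)"
  have cF: "countable Fam" unfolding Fam_def by simp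
  have ndF: "\<forall>Nd\<in>Fam. nowhere_dense_in X Nd"
  proof
    fix Nd assume "Nd \<in> Fam"
    then obtain b k w m j0 where Nd: "Nd = {0<..1} - Ob b k w m j0" unfolding Fam_def by auto
    show "nowhere_dense_in X Nd"
    proof (rule nd_from_dense)
      show "Nd \<subseteq> topspace X" using Nd topX by auto
      fix V assume V: "openin X V" "V \<noteq> {}"
      show "\<exists>W. openin X W \<and> W \<noteq> {} \<and> W \<subseteq> V \<and> W \<inter> Nd = {}"
      proof (cases "valid b k w")
        case False
        hence "Nd = {}" unfolding Nd Ob_def by auto
        thus ?thesis using V by blast
      next
        case True
        hence vb: "b \<ge> 2" "k \<ge> 1" "w \<noteq> []" "set w \<subseteq> {..<b}" unfolding valid_def by auto
        have eps: "1 / real (Suc m) > 0" by simp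
        have "\<exists>W. openin X W \<and> W \<noteq> {} \<and> W \<subseteq> V \<and>
           (\<forall>x\<in>W. \<exists>j\<ge>j0. \<forall>n\<in>{Nf j..<Nf (Suc j)}. \<forall>s\<in>strings b k.
              \<bar>Api a b k x n s - cnt w s / real (length w)\<bar> < 1 / real (Suc m))"
          using dense_step[OF assms(2) smN vb eps, of V j0] V unfolding X_def by blast
        then obtain W where W: "openin X W" "W \<noteq> {}" "W \<subseteq> V"
          "\<forall>x\<in>W. \<exists>j\<ge>j0. \<forall>n\<in>{Nf j..<Nf (Suc j)}. \<forall>s\<in>strings b k.
              \<bar>Api a b k x n s - cnt w s / real (length w)\<bar> < 1 / real (Suc m)"
          by (elim exE conjE)
        have "W \<subseteq> {0<..1}" using openin_subset[OF W(1)] topX by simp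
        hence "W \<subseteq> Ob b k w m j0" using W(4) unfolding Ob_def by blast
        thus ?thesis using W(1,2,3) Nd by blast
      qed
    qed
  qed
  have main: "x \<in> Good" if x01: "x \<in> {0<..1}" and allO: "\<And>b k w m j0. x \<in> Ob b k w m j0" for x
  proof -
    have "Delta b k \<subseteq> Gamma_clust b k x I a" if bk: "b \<ge> 2" "k \<ge> 1" for b k
    proof
      fix \<eta> assume eta: "\<eta> \<in> Delta b k"
      have etaE: "\<eta> \<in> extensional (strings b k)" using eta unfolding Delta_def by auto
      have top: "\<eta> \<in> topspace (Rstrings b k)"
        unfolding Rstrings_def topspace_product_topology using etaE by (simp add: PiE_iff)
      have "{n. Api a b k x n \<in> U} \<notin> I" if U: "openin (Rstrings b k) U" "\<eta> \<in> U" for U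
      proof -
        obtain \<epsilon> where eps: "\<epsilon> > 0"
          and box: "\<forall>p\<in>extensional (strings b k). (\<forall>s\<in>strings b k. \<bar>p s - \<eta> s\<bar> < \<epsilon>) \<longrightarrow> p \<in> U"
          using box_in_open[OF U] by blast
        have eps2: "\<epsilon> / 2 > 0" using eps by simp
        obtain w where w: "w \<noteq> []" "set w \<subseteq> {..<b}"
          "\<forall>s\<in>strings b k. \<bar>cnt w s / real (length w) - \<eta> s\<bar> < \<epsilon> / 2"
          using approx_word[OF bk eta eps2] by blast
        obtain m where m: "inverse (real (Suc m)) < \<epsilon> / 2" using reals_Archimedean[OF eps2] by blast
        have vw: "valid b k w" unfolding valid_def using bk w by auto
        have "\<forall>j0. \<exists>j\<ge>j0. {Nf j..<Nf (Suc j)} \<subseteq> {n. Api a b k x n \<in> U}"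
        proof
          fix j0
          have "x \<in> Ob b k w m j0" by (rule allO)
          then obtain j where j: "j \<ge> j0" and jp: "\<forall>n\<in>{Nf j..<Nf (Suc j)}. \<forall>s\<in>strings b k.
              \<bar>Api a b k x n s - cnt w s / real (length w)\<bar> < 1 / real (Suc m)"
            using vw unfolding Ob_def by blast
          have "{Nf j..<Nf (Suc j)} \<subseteq> {n. Api a b k x n \<in> U}"
          proof
            fix n assume n: "n \<in> {Nf j..<Nf (Suc j)}"
            have ext: "Api a b k x n \<in> extensional (strings b k)" unfolding Api_def by simp
            have "\<forall>s\<in>strings b k. \<bar>Api a b k x n s - \<eta> s\<bar> < \<epsilon>"
            proof
              fix s assume s: "s \<in> strings b k"
              have "\<bar>Api a b k x n s - cnt w s / real (length w)\<bar> < 1 / real (Suc m)" using jp n s by blast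
              moreover have "1 / real (Suc m) < \<epsilon> / 2" using m by (simp add: inverse_eq_divide)
              moreover have "\<bar>cnt w s / real (length w) - \<eta> s\<bar> < \<epsilon> / 2" using w(3) s by blast
              ultimately show "\<bar>Api a b k x n s - \<eta> s\<bar> < \<epsilon>" by linarith
            qed
            hence "Api a b k x n \<in> U" using box ext by blast
            thus "n \<in> {n. Api a b k x n \<in> U}" by simp
          qed
          thus "\<exists>j\<ge>j0. {Nf j..<Nf (Suc j)} \<subseteq> {n. Api a b k x n \<in> U}" using j by blast
        qed
        thus ?thesis using NfI by blast
      qed
      thus "\<eta> \<in> Gamma_clust b k x I a"
        unfolding Gamma_clust_def I_cluster_point_def using top by blast
    qed
    thus ?thesis unfolding Good_def using x01 by blast
  qed
  have cover: "{0<..1} - Good \<subseteq> \<Union>Fam"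
  proof
    fix x assume x: "x \<in> {0<..1} - Good"
    show "x \<in> \<Union>Fam"
    proof (rule ccontr)
      assume nx: "x \<notin> \<Union>Fam"
      have "x \<in> Ob b k w m j0" for b k w m j0
      proof -
        have "{0<..1} - Ob b k w m j0 \<in> Fam" unfolding Fam_def by (rule image_eqI[of _ _ "(b,k,w,m,j0)"]) auto
        thus ?thesis using nx x by blast
      qed
      hence "x \<in> Good" using main x by blast
      thus False using x by blast
    qed
  qed
  have "meager_in X (topspace X - Good)"
    unfolding meager_in_def using cF ndF cover topX by blast
  thus ?thesis unfolding comeager_in_def X_def Good_def .
qed

end
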